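(* For every $\alpha \in (0,1)$ there exist constants $c_\alpha , d_\alpha > 0$ such that \[ R^{2\alpha}\, \hat{\varphi_\alpha}\!\left(1-\frac{y}{R}\right) \leq d_\alpha\, y^{2\alpha} \] for every $R>0$ and $y> 0$, and \[ \lim_{R\to \infty} R^{2\alpha}\, \hat{\varphi_\alpha}\!\left(1-\frac{y}{R}\right) = c_\alpha\, y^{2\alpha} \] for every $y > 0$. Moreover, $c_\alpha$ depends continuously on $\alpha\in(0,1)$.
   Context: Fourier transform convention: $\hat f(y)=\frac{1}{\sqrt{2\pi}}\int_{\mathbb{R}} f(x)e^{-iyx}\,dx$. $J_\alpha$ is the Bessel function of the first kind of order $\alpha$, and $\varphi_\alpha(x)=J_\alpha(x/2)^2/x^{2\alpha}$, an even entire function which for $\alpha>0$ is integrable with Fourier transform supported in $[-1,1]$. *)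

theory Defs
  imports "HOL-Analysis.Analysis"
begin

text \<open>Bessel function of the first kind of real order a, for x > 0, via its power series.\<close>
definition besselJ :: "real \<Rightarrow> real \<Rightarrow> real" where
  "besselJ a x = (\<Sum>m. (-1) ^ m / (fact m * Gamma (real m + a + 1)) * (x / 2) powr (2 * real m + a))"

text \<open>phi_a(x) = J_a(x/2)^2 / x^(2a), extended evenly to x < 0 and by continuity to x = 0.\<close>
definition phi :: "real \<Rightarrow> real \<Rightarrow> real" where
  "phi a x = (if x = 0 then 1 / (4 powr (2 * a) * (Gamma (a + 1))\<^sup>2)
              else (besselJ a (\<bar>x\<bar> / 2))\<^sup>2 / \<bar>x\<bar> powr (2 * a))"

definition fourier :: "(real \<Rightarrow> real) \<Rightarrow> real \<Rightarrow> complex" where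
  "fourier f y = complex_of_real (1 / sqrt (2 * pi)) *
     (LINT x|lborel. complex_of_real (f x) * exp (- \<i> * complex_of_real (y * x)))"

end

theory Submission
  imports Defs "HOL-Probability.Characteristic_Functions"
begin

lemma fubini_nn_bound:
  fixes f :: "real \<Rightarrow> real \<Rightarrow> complex"
  assumes [measurable]: "(\<lambda>(x,y). f x y) \<in> borel_measurable (lborel \<Otimes>\<^sub>M lborel)"
  and fin: "(\<integral>\<^sup>+x. \<integral>\<^sup>+y. norm (f x y) \<partial>lborel \<partial>lborel) < \<infinity>"
  shows "integrable (lborel \<Otimes>\<^sub>M lborel) (\<lambda>(x,y). f x y)"
proof (rule integrableI_bounded)
  have "(\<integral>\<^sup>+x. \<integral>\<^sup>+y. norm (f x y) \<partial>lborel \<partial>lborel) = (\<integral>\<^sup>+p. norm ((\<lambda>(x,y). f x y) p) \<partial>(lborel \<Otimes>\<^sub>M lborel))"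
    by (subst lborel.nn_integral_fst[symmetric]) auto
  with fin show "(\<integral>\<^sup>+p. norm ((\<lambda>(x,y). f x y) p) \<partial>(lborel \<Otimes>\<^sub>M lborel)) < \<infinity>" by simp
qed simp

lemma fubini_swap:
  fixes f :: "real \<Rightarrow> real \<Rightarrow> complex"
  assumes [measurable]: "(\<lambda>(x,y). f x y) \<in> borel_measurable (lborel \<Otimes>\<^sub>M lborel)"
  and fin: "(\<integral>\<^sup>+x. \<integral>\<^sup>+y. norm (f x y) \<partial>lborel \<partial>lborel) < \<infinity>"
  shows "(\<integral>y. (\<integral>x. f x y \<partial>lborel) \<partial>lborel) = (\<integral>x. (\<integral>y. f x y \<partial>lborel) \<partial>lborel)"
  by (rule lborel_pair.Fubini_integral[OF fubini_nn_bound[OF assms]])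

lemma gauss_ft:
  "(\<integral>x. complex_of_real (exp (- x\<^sup>2 / 2)) * iexp (t * x) \<partial>lborel) = complex_of_real (sqrt (2*pi) * exp (- t\<^sup>2 / 2))"
proof -
  have "char std_normal_distribution t = (\<integral>x. std_normal_density x *\<^sub>R iexp (t * x) \<partial>lborel)"
    unfolding char_def by (rule integral_density) auto
  also have "\<dots> = (\<integral>x. complex_of_real (1 / sqrt (2*pi)) * (complex_of_real (exp (- x\<^sup>2 / 2)) * iexp (t * x)) \<partial>lborel)"
    by (intro Bochner_Integration.integral_cong refl) (simp add: std_normal_density_def scaleR_conv_of_real)
  also have "\<dots> = complex_of_real (1 / sqrt (2*pi)) * (\<integral>x. complex_of_real (exp (- x\<^sup>2 / 2)) * iexp (t * x) \<partial>lborel)"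
    by simp
  finally have "complex_of_real (exp (- (t\<^sup>2) / 2)) = complex_of_real (1 / sqrt (2*pi)) * (\<integral>x. complex_of_real (exp (- x\<^sup>2 / 2)) * iexp (t * x) \<partial>lborel)"
    by (simp add: char_std_normal_distribution)
  then show ?thesis
    by (simp add: field_simps)
qed

lemma gauss_ft_scaled:
  assumes "\<sigma> > 0"
  shows "(\<integral>x. complex_of_real (exp (- (\<sigma>*x)\<^sup>2 / 2)) * iexp (x * v) \<partial>lborel) = complex_of_real (sqrt (2*pi) / \<sigma> * exp (- (v/\<sigma>)\<^sup>2 / 2))"
proof -
  have "(\<integral>x. complex_of_real (exp (- (\<sigma>*x)\<^sup>2 / 2)) * iexp (x * v) \<partial>lborel)
      = \<bar>1/\<sigma>\<bar> *\<^sub>R (\<integral>x. complex_of_real (exp (- (\<sigma>*(0 + 1/\<sigma>*x))\<^sup>2 / 2)) * iexp ((0 + 1/\<sigma>*x) * v) \<partial>lborel)"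
    by (rule lborel_integral_real_affine) (use assms in simp)
  also have "(\<lambda>x. complex_of_real (exp (- (\<sigma>*(0 + 1/\<sigma>*x))\<^sup>2 / 2)) * iexp ((0 + 1/\<sigma>*x) * v)) = (\<lambda>x. complex_of_real (exp (- x\<^sup>2 / 2)) * iexp ((v/\<sigma>) * x))"
    using assms by (auto simp: fun_eq_iff field_simps)
  also note gauss_ft
  finally show ?thesis using assms by (simp add: scaleR_conv_of_real field_simps)
qed

lemma integrable_gauss: "(\<sigma>::real) > 0 \<Longrightarrow> integrable lborel (\<lambda>x. exp (- (\<sigma>*x)\<^sup>2 / 2))"
proof -
  assume s: "\<sigma> > 0"
  have "integrable lborel (\<lambda>x. (sqrt (2*pi) / \<sigma>) * normal_density 0 (1/\<sigma>) x)"
    by (rule integrable_mult_right, rule integrable_normal_density) (use s in simp)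
  also have "(\<lambda>x. (sqrt (2*pi) / \<sigma>) * normal_density 0 (1/\<sigma>) x) = (\<lambda>x. exp (- (\<sigma>*x)\<^sup>2 / 2))"
  proof
    fix x
    have "sqrt (2 * pi * (1/\<sigma>)\<^sup>2) = sqrt (2*pi) / \<sigma>" using s
      by (simp add: real_sqrt_mult power_divide real_sqrt_divide)
    then show "(sqrt (2*pi) / \<sigma>) * normal_density 0 (1/\<sigma>) x = exp (- (\<sigma>*x)\<^sup>2 / 2)"
      using s by (simp add: normal_density_def power_divide power_mult_distrib)
  qed
  finally show ?thesis .
qed

lemma integral_gauss: "(\<integral>x. exp (- x\<^sup>2 / 2) \<partial>lborel) = sqrt (2*pi)"
proof -
  have eqf: "std_normal_density = (\<lambda>x. (1 / sqrt (2*pi)) * exp (- x\<^sup>2 / 2))"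
    by (rule ext) (simp add: std_normal_density_def)
  have "(\<integral>x. std_normal_density x \<partial>lborel) = 1" by simp
  then have "(\<integral>x. (1 / sqrt (2*pi)) * exp (- x\<^sup>2 / 2) \<partial>lborel) = 1" unfolding eqf .
  moreover have "(\<integral>x. (1 / sqrt (2*pi)) * exp (- x\<^sup>2 / 2) \<partial>lborel) = (1 / sqrt (2*pi)) * (\<integral>x. exp (- x\<^sup>2 / 2) \<partial>lborel)"
    by (rule integral_mult_right_zero)
  ultimately have "(1 / sqrt (2*pi)) * (\<integral>x. exp (- x\<^sup>2 / 2) \<partial>lborel) = 1" by metis
  then show ?thesis by (metis divide_eq_1_iff mult_1 times_divide_eq_left)
qed

lemma iexp_mult_iexp: "iexp a * iexp b = iexp (a + b)"
  by (simp add: exp_add[symmetric] distrib_left)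

lemma norm_iexp [simp]: "norm (iexp a) = 1"
  by simp

lemma regularized:
  fixes H :: "real \<Rightarrow> real" and S :: "real \<Rightarrow> complex"
  assumes Hm[measurable]: "H \<in> borel_measurable borel"
  and Hint: "integrable lborel H" and Hnn: "\<And>u. 0 \<le> H u"
  and S: "\<And>x. S x = (\<integral>u. complex_of_real (H u) * iexp (x * u) \<partial>lborel)"
  and \<sigma>: "\<sigma> > 0"
  shows "(\<integral>x. S x * complex_of_real (exp (- (\<sigma>*x)\<^sup>2/2)) * iexp (- (\<xi> * x)) \<partial>lborel)
       = complex_of_real (sqrt (2*pi) * (\<integral>z. H (\<xi> + \<sigma>*z) * exp (- z\<^sup>2/2) \<partial>lborel))"
proof -
  define G where "G x = exp (- (\<sigma>*x)\<^sup>2/2)" for x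
  have Gm[measurable]: "G \<in> borel_measurable borel" unfolding G_def by measurable
  have Gint: "integrable lborel G" unfolding G_def by (rule integrable_gauss[OF \<sigma>])
  define F where "F x u = complex_of_real (H u) * complex_of_real (G x) * iexp (x * (u - \<xi>))" for x u
  have 1: "S x * complex_of_real (G x) * iexp (- (\<xi> * x)) = (\<integral>u. F x u \<partial>lborel)" for x
  proof -
    have "S x * complex_of_real (G x) * iexp (- (\<xi> * x)) = S x * (complex_of_real (G x) * iexp (- (\<xi> * x)))"
      by (rule mult.assoc)
    also have "\<dots> = (\<integral>u. complex_of_real (H u) * iexp (x * u) * (complex_of_real (G x) * iexp (- (\<xi> * x))) \<partial>lborel)"
      unfolding S by (rule integral_mult_left_zero[symmetric])
    also have "\<dots> = (\<integral>u. F x u \<partial>lborel)"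
    proof (intro Bochner_Integration.integral_cong refl)
      fix u
      have e: "x * u + - (\<xi> * x) = x * (u - \<xi>)" by (simp add: algebra_simps)
      have "iexp (x * u) * iexp (- (\<xi> * x)) = iexp (x * (u - \<xi>))"
        by (metis iexp_mult_iexp e)
      then show "complex_of_real (H u) * iexp (x * u) * (complex_of_real (G x) * iexp (- (\<xi> * x))) = F x u"
        unfolding F_def by (metis (no_types, lifting) mult.assoc mult.commute)
    qed
    finally show ?thesis .
  qed
  have Fm: "(\<lambda>(x,u). F x u) \<in> borel_measurable (lborel \<Otimes>\<^sub>M lborel)"
    unfolding F_def by measurable
  have nF: "norm (F x u) = H u * G x" for x u
    unfolding F_def using Hnn[of u] by (simp add: norm_mult G_def)
  have fin: "(\<integral>\<^sup>+x. \<integral>\<^sup>+u. norm (F x u) \<partial>lborel \<partial>lborel) < \<infinity>"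
  proof -
    have "(\<integral>\<^sup>+x. \<integral>\<^sup>+u. norm (F x u) \<partial>lborel \<partial>lborel) = (\<integral>\<^sup>+x. ennreal (G x) * (\<integral>\<^sup>+u. ennreal (H u) \<partial>lborel) \<partial>lborel)"
      unfolding nF
      by (intro nn_integral_cong, subst nn_integral_cmult[symmetric])
         (auto simp: G_def ennreal_mult Hnn mult.commute intro!: nn_integral_cong)
    also have "\<dots> = (\<integral>\<^sup>+x. ennreal (G x) \<partial>lborel) * (\<integral>\<^sup>+u. ennreal (H u) \<partial>lborel)"
      by (rule nn_integral_multc) measurable
    also have "\<dots> < \<infinity>"
    proof -
      have a: "(\<integral>\<^sup>+x. ennreal (G x) \<partial>lborel) < \<infinity>"
        using Gint unfolding integrable_iff_bounded by (simp add: G_def)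
      have b: "(\<integral>\<^sup>+x. ennreal (H x) \<partial>lborel) < \<infinity>"
        using Hint Hnn unfolding integrable_iff_bounded by simp
      show ?thesis using a b by (simp add: ennreal_mult_less_top)
    qed
    finally show ?thesis .
  qed
  have "(\<integral>x. S x * complex_of_real (exp (- (\<sigma>*x)\<^sup>2/2)) * iexp (- (\<xi> * x)) \<partial>lborel)
      = (\<integral>x. (\<integral>u. F x u \<partial>lborel) \<partial>lborel)"
    using 1 unfolding G_def by simp
  also have "\<dots> = (\<integral>u. (\<integral>x. F x u \<partial>lborel) \<partial>lborel)"
    by (rule fubini_swap[OF Fm fin, symmetric])
  also have "\<dots> = (\<integral>u. complex_of_real (H u * (sqrt (2*pi) / \<sigma> * exp (- ((u - \<xi>)/\<sigma>)\<^sup>2 / 2))) \<partial>lborel)"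
  proof (intro Bochner_Integration.integral_cong refl)
    fix u
    have "(\<integral>x. F x u \<partial>lborel) = complex_of_real (H u) * (\<integral>x. complex_of_real (exp (- (\<sigma>*x)\<^sup>2 / 2)) * iexp (x * (u - \<xi>)) \<partial>lborel)"
      unfolding F_def G_def by (simp add: mult.assoc)
    also have "\<dots> = complex_of_real (H u * (sqrt (2*pi) / \<sigma> * exp (- ((u - \<xi>)/\<sigma>)\<^sup>2 / 2)))"
      by (subst gauss_ft_scaled[OF \<sigma>]) simp
    finally show "(\<integral>x. F x u \<partial>lborel) = complex_of_real (H u * (sqrt (2*pi) / \<sigma> * exp (- ((u - \<xi>)/\<sigma>)\<^sup>2 / 2)))" .
  qed
  also have "\<dots> = complex_of_real (\<integral>u. H u * (sqrt (2*pi) / \<sigma> * exp (- ((u - \<xi>)/\<sigma>)\<^sup>2 / 2)) \<partial>lborel)"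
    by (rule integral_complex_of_real)
  also have "(\<integral>u. H u * (sqrt (2*pi) / \<sigma> * exp (- ((u - \<xi>)/\<sigma>)\<^sup>2 / 2)) \<partial>lborel)
      = \<bar>\<sigma>\<bar> *\<^sub>R (\<integral>z. H (\<xi> + \<sigma>*z) * (sqrt (2*pi) / \<sigma> * exp (- ((\<xi> + \<sigma>*z - \<xi>)/\<sigma>)\<^sup>2 / 2)) \<partial>lborel)"
    by (rule lborel_integral_real_affine) (use \<sigma> in simp)
  also have "(\<lambda>z. H (\<xi> + \<sigma>*z) * (sqrt (2*pi) / \<sigma> * exp (- ((\<xi> + \<sigma>*z - \<xi>)/\<sigma>)\<^sup>2 / 2))) = (\<lambda>z. (sqrt (2*pi) / \<sigma>) * (H (\<xi> + \<sigma>*z) * exp (- z\<^sup>2 / 2)))"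
    using \<sigma> by (auto simp: fun_eq_iff)
  also have "\<bar>\<sigma>\<bar> *\<^sub>R (\<integral>z. (sqrt (2*pi) / \<sigma>) * (H (\<xi> + \<sigma>*z) * exp (- z\<^sup>2 / 2)) \<partial>lborel) = sqrt (2*pi) * (\<integral>z. H (\<xi> + \<sigma>*z) * exp (- z\<^sup>2/2) \<partial>lborel)"
    using \<sigma> by (simp del: integral_mult_right integral_mult_right_zero add: integral_mult_right_zero)
  finally show ?thesis .
qed

lemma inversion:
  fixes H :: "real \<Rightarrow> real" and s :: "real \<Rightarrow> real"
  assumes Hm[measurable]: "H \<in> borel_measurable borel"
  and Hint: "integrable lborel H" and Hnn: "\<And>u. 0 \<le> H u" and HM: "\<And>u. H u \<le> M"
  and Hc: "\<And>u. isCont H u"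
  and s: "\<And>x. complex_of_real (s x) = (\<integral>u. complex_of_real (H u) * iexp (x * u) \<partial>lborel)"
  and snn: "\<And>x. 0 \<le> s x"
  shows "integrable lborel s"
    and "(\<integral>x. complex_of_real (s x) * iexp (- (\<xi> * x)) \<partial>lborel) = complex_of_real (2*pi*H \<xi>)"
proof -
  have seq: "s = (\<lambda>x. Re (\<integral>u. complex_of_real (H u) * iexp (x * u) \<partial>lborel))"
    by (rule ext) (metis s Re_complex_of_real)
  have sm[measurable]: "s \<in> borel_measurable borel"
    unfolding seq by measurable
  define \<sigma> where "\<sigma> k = inverse (real (Suc k))" for k
  have \<sigma>pos: "\<sigma> k > 0" for k unfolding \<sigma>_def by simp
  have \<sigma>lim: "\<sigma> \<longlonglongrightarrow> 0" unfolding \<sigma>_def by (rule LIMSEQ_inverse_real_of_nat)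
  define R where "R \<xi> k = sqrt (2*pi) * (\<integral>z. H (\<xi> + \<sigma> k*z) * exp (- z\<^sup>2/2) \<partial>lborel)" for \<xi> k
  have gint: "integrable lborel (\<lambda>z::real. exp (- z\<^sup>2/2))"
    using integrable_gauss[of 1] by simp
  have reg: "(\<integral>x. complex_of_real (s x) * complex_of_real (exp (- (\<sigma> k*x)\<^sup>2/2)) * iexp (- (\<xi> * x)) \<partial>lborel)
       = complex_of_real (R \<xi> k)" for \<xi> k
    unfolding R_def by (rule regularized[OF Hm Hint Hnn _ \<sigma>pos]) (rule s)
  have Rlim: "(\<lambda>k. R \<xi> k) \<longlonglongrightarrow> 2*pi*H \<xi>" for \<xi>
  proof -
    have "(\<lambda>k. \<integral>z. H (\<xi> + \<sigma> k*z) * exp (- z\<^sup>2/2) \<partial>lborel) \<longlonglongrightarrow> (\<integral>z. H \<xi> * exp (- z\<^sup>2/2) \<partial>lborel)"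
    proof (rule integral_dominated_convergence[where w="\<lambda>z. M * exp (- z\<^sup>2/2)"])
      show "integrable lborel (\<lambda>z. M * exp (- z\<^sup>2/2))" using gint by simp
      show "AE z in lborel. (\<lambda>k. H (\<xi> + \<sigma> k*z) * exp (- z\<^sup>2/2)) \<longlonglongrightarrow> H \<xi> * exp (- z\<^sup>2/2)"
      proof (intro AE_I2 tendsto_mult tendsto_const)
        fix z
        have "(\<lambda>k. \<xi> + \<sigma> k*z) \<longlonglongrightarrow> \<xi> + 0 * z"
          by (intro tendsto_intros \<sigma>lim)
        then show "(\<lambda>k. H (\<xi> + \<sigma> k*z)) \<longlonglongrightarrow> H \<xi>"
          using isCont_tendsto_compose[OF Hc] by simp
      qed
      show "AE z in lborel. norm (H (\<xi> + \<sigma> k*z) * exp (- z\<^sup>2/2)) \<le> M * exp (- z\<^sup>2/2)" for k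
        using HM Hnn by (intro AE_I2) (simp add: abs_mult)
    qed measurable
    also have "(\<integral>z. H \<xi> * exp (- z\<^sup>2/2) \<partial>lborel) = H \<xi> * sqrt (2*pi)"
      using integral_gauss by simp
    finally have "(\<lambda>k. sqrt (2*pi) * (\<integral>z. H (\<xi> + \<sigma> k*z) * exp (- z\<^sup>2/2) \<partial>lborel)) \<longlonglongrightarrow> sqrt (2*pi) * (H \<xi> * sqrt (2*pi))"
      by (intro tendsto_mult tendsto_const)
    then show ?thesis unfolding R_def by (simp add: algebra_simps)
  qed
  have M0: "0 \<le> M" using Hnn[of 0] HM[of 0] by linarith
  have Rbound: "R 0 k \<le> 2*pi*M" for k
  proof -
    have "(\<integral>z. H (0 + \<sigma> k*z) * exp (- z\<^sup>2/2) \<partial>lborel) \<le> (\<integral>z. M * exp (- z\<^sup>2/2) \<partial>lborel)"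
    proof (rule integral_mono)
      show "integrable lborel (\<lambda>z. M * exp (- z\<^sup>2/2))" using gint by simp
      show "integrable lborel (\<lambda>z. H (0 + \<sigma> k*z) * exp (- z\<^sup>2/2))"
        by (rule Bochner_Integration.integrable_bound[where f="\<lambda>z. M * exp (- z\<^sup>2/2)"])
           (use gint HM Hnn M0 in \<open>auto simp: abs_mult abs_of_nonneg[OF M0]\<close>)
      show "H (0 + \<sigma> k*z) * exp (- z\<^sup>2/2) \<le> M * exp (- z\<^sup>2/2)" for z
        using HM by simp
    qed
    also have "\<dots> = M * sqrt (2*pi)" using integral_gauss by simp
    finally have "(\<integral>z. H (0 + \<sigma> k*z) * exp (- z\<^sup>2/2) \<partial>lborel) \<le> M * sqrt (2*pi)" .
    then have "sqrt (2*pi) * (\<integral>z. H (0 + \<sigma> k*z) * exp (- z\<^sup>2/2) \<partial>lborel) \<le> sqrt (2*pi) * (M * sqrt (2*pi))"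
      by (intro mult_left_mono) simp_all
    also have "sqrt (2*pi) * (M * sqrt (2*pi)) = M * (sqrt (2*pi))\<^sup>2"
      by (simp add: power2_eq_square)
    also have "\<dots> = 2*pi*M" by simp
    finally show ?thesis unfolding R_def by simp
  qed
  have sbound: "s x \<le> (\<integral>u. H u \<partial>lborel)" for x
  proof -
    have "s x = norm (complex_of_real (s x))" using snn[of x] by simp
    also have "\<dots> \<le> (\<integral>u. norm (complex_of_real (H u) * iexp (x * u)) \<partial>lborel)"
      unfolding s by (rule integral_norm_bound)
    also have "\<dots> = (\<integral>u. H u \<partial>lborel)"
      using Hnn by (simp add: norm_mult)
    finally show ?thesis .
  qed
  define G where "G k x = exp (- (\<sigma> k*x)\<^sup>2/2)" for k x
  have Gint: "integrable lborel (G k)" for k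
    unfolding G_def by (rule integrable_gauss[OF \<sigma>pos])
  have Hi0: "0 \<le> (\<integral>u. H u \<partial>lborel)" using sbound[of 0] snn[of 0] by linarith
  have sGint: "integrable lborel (\<lambda>x. s x * G k x)" for k
  proof (rule Bochner_Integration.integrable_bound[where f="\<lambda>x. (\<integral>u. H u \<partial>lborel) * G k x"])
    show "integrable lborel (\<lambda>x. (\<integral>u. H u \<partial>lborel) * G k x)" using Gint[of k] by simp
    show "AE x in lborel. norm (s x * G k x) \<le> norm ((\<integral>u. H u \<partial>lborel) * G k x)"
    proof (rule AE_I2)
      fix x
      have g0: "0 \<le> G k x" by (simp add: G_def)
      have "s x * G k x \<le> (\<integral>u. H u \<partial>lborel) * G k x"
        by (rule mult_right_mono[OF sbound g0])
      then show "norm (s x * G k x) \<le> norm ((\<integral>u. H u \<partial>lborel) * G k x)"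
        using g0 snn[of x] Hi0 by (simp add: abs_mult)
    qed
  qed (simp add: G_def)
  have Glim: "(\<lambda>k. G k x) \<longlonglongrightarrow> 1" for x
  proof -
    have "(\<lambda>k. exp (- (\<sigma> k*x)\<^sup>2/2)) \<longlonglongrightarrow> exp (- (0*x)\<^sup>2/2)"
      by (intro tendsto_intros \<sigma>lim) auto
    then show ?thesis by (simp add: G_def)
  qed
  have sG: "(\<integral>x. s x * G k x \<partial>lborel) = R 0 k" for k
  proof -
    have "complex_of_real (\<integral>x. s x * G k x \<partial>lborel) = (\<integral>x. complex_of_real (s x) * complex_of_real (G k x) * iexp (- (0 * x)) \<partial>lborel)"
      by (subst integral_complex_of_real[symmetric]) (simp add: G_def)
    also have "\<dots> = complex_of_real (R 0 k)" unfolding G_def by (rule reg)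
    finally show ?thesis by simp
  qed
  show sint: "integrable lborel s"
  proof (rule integrableI_bounded)
    have "(\<integral>\<^sup>+x. ennreal (norm (s x)) \<partial>lborel) = (\<integral>\<^sup>+x. liminf (\<lambda>k. ennreal (s x * G k x)) \<partial>lborel)"
    proof (intro nn_integral_cong)
      fix x
      have "(\<lambda>k. ennreal (s x * G k x)) \<longlonglongrightarrow> ennreal (s x * 1)"
        by (intro tendsto_ennrealI tendsto_mult tendsto_const Glim)
      then show "ennreal (norm (s x)) = liminf (\<lambda>k. ennreal (s x * G k x))"
        using snn[of x] by (simp add: lim_imp_Liminf)
    qed
    also have "\<dots> \<le> liminf (\<lambda>k. \<integral>\<^sup>+x. ennreal (s x * G k x) \<partial>lborel)"
      by (rule nn_integral_liminf) (simp add: G_def)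
    also have "\<dots> = liminf (\<lambda>k. ennreal (R 0 k))"
    proof -
      have "(\<integral>\<^sup>+x. ennreal (s x * G k x) \<partial>lborel) = ennreal (R 0 k)" for k
        using sGint[of k] snn sG[of k]
        by (subst nn_integral_eq_integral) (auto simp: G_def)
      then show ?thesis by simp
    qed
    also have "\<dots> \<le> limsup (\<lambda>k. ennreal (R 0 k))"
      by (rule Liminf_le_Limsup) simp
    also have "\<dots> \<le> ennreal (2*pi*M)"
      by (rule Limsup_bounded) (use Rbound in \<open>auto intro!: always_eventually ennreal_leI\<close>)
    also have "\<dots> < \<infinity>" by simp
    finally show "(\<integral>\<^sup>+x. ennreal (norm (s x)) \<partial>lborel) < \<infinity>" .
  qed simp
  have "(\<lambda>k. \<integral>x. complex_of_real (s x) * complex_of_real (G k x) * iexp (- (\<xi> * x)) \<partial>lborel)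
      \<longlonglongrightarrow> (\<integral>x. complex_of_real (s x) * iexp (- (\<xi> * x)) \<partial>lborel)"
  proof (rule integral_dominated_convergence[where w=s])
    show "AE x in lborel. (\<lambda>k. complex_of_real (s x) * complex_of_real (G k x) * iexp (- (\<xi> * x)))
        \<longlonglongrightarrow> complex_of_real (s x) * iexp (- (\<xi> * x))"
    proof (intro AE_I2)
      fix x
      have "(\<lambda>k. complex_of_real (s x) * complex_of_real (G k x) * iexp (- (\<xi> * x)))
        \<longlonglongrightarrow> complex_of_real (s x) * complex_of_real 1 * iexp (- (\<xi> * x))"
        by (intro tendsto_mult tendsto_const tendsto_of_real Glim)
      then show "(\<lambda>k. complex_of_real (s x) * complex_of_real (G k x) * iexp (- (\<xi> * x)))
        \<longlonglongrightarrow> complex_of_real (s x) * iexp (- (\<xi> * x))" by simp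
    qed
    show "AE x in lborel. norm (complex_of_real (s x) * complex_of_real (G k x) * iexp (- (\<xi> * x))) \<le> s x" for k
      using snn by (intro AE_I2) (auto simp: norm_mult G_def intro!: mult_left_le)
  qed (use sint in \<open>auto simp: G_def\<close>)
  moreover have "(\<lambda>k. \<integral>x. complex_of_real (s x) * complex_of_real (G k x) * iexp (- (\<xi> * x)) \<partial>lborel)
      \<longlonglongrightarrow> complex_of_real (2*pi*H \<xi>)"
    unfolding G_def reg by (intro tendsto_of_real Rlim)
  ultimately show "(\<integral>x. complex_of_real (s x) * iexp (- (\<xi> * x)) \<partial>lborel) = complex_of_real (2*pi*H \<xi>)"
    by (rule LIMSEQ_unique)
qed


lemma fubini_nn_bound_real:
  fixes f :: "real \<Rightarrow> real \<Rightarrow> real"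
  assumes [measurable]: "(\<lambda>(x,y). f x y) \<in> borel_measurable (lborel \<Otimes>\<^sub>M lborel)"
  and fin: "(\<integral>\<^sup>+x. \<integral>\<^sup>+y. norm (f x y) \<partial>lborel \<partial>lborel) < \<infinity>"
  shows "integrable (lborel \<Otimes>\<^sub>M lborel) (\<lambda>(x,y). f x y)"
proof (rule integrableI_bounded)
  have "(\<integral>\<^sup>+x. \<integral>\<^sup>+y. norm (f x y) \<partial>lborel \<partial>lborel) = (\<integral>\<^sup>+p. norm ((\<lambda>(x,y). f x y) p) \<partial>(lborel \<Otimes>\<^sub>M lborel))"
    by (subst lborel.nn_integral_fst[symmetric]) auto
  with fin show "(\<integral>\<^sup>+p. norm ((\<lambda>(x,y). f x y) p) \<partial>(lborel \<Otimes>\<^sub>M lborel)) < \<infinity>" by simp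
qed simp

lemma conv_square:
  fixes v :: "real \<Rightarrow> real"
  assumes vm[measurable]: "v \<in> borel_measurable borel" and vint: "integrable lborel v" and vnn: "\<And>r. 0 \<le> v r"
  shows "integrable lborel (\<lambda>u. \<integral>r. v r * v (u - r) \<partial>lborel)"
  and "(\<integral>r. complex_of_real (v r) * iexp (x * r) \<partial>lborel) * (\<integral>r. complex_of_real (v r) * iexp (x * r) \<partial>lborel)
       = (\<integral>u. complex_of_real (\<integral>r. v r * v (u - r) \<partial>lborel) * iexp (x * u) \<partial>lborel)"
proof -
  have fin0: "(\<integral>\<^sup>+r. \<integral>\<^sup>+u. ennreal (v r * v (u - r)) \<partial>lborel \<partial>lborel) < \<infinity>"
  proof -
    have "(\<integral>\<^sup>+r. \<integral>\<^sup>+u. ennreal (v r * v (u - r)) \<partial>lborel \<partial>lborel)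
        = (\<integral>\<^sup>+r. ennreal (v r) * (\<integral>\<^sup>+u. ennreal (v u) \<partial>lborel) \<partial>lborel)"
    proof (intro nn_integral_cong)
      fix r
      have e: "(\<integral>\<^sup>+u. ennreal (v u) \<partial>lborel) = (\<integral>\<^sup>+u. ennreal (v (u - r)) \<partial>lborel)"
        using nn_integral_real_affine[of "\<lambda>u. ennreal (v u)" 1 "-r"] by simp
      show "(\<integral>\<^sup>+u. ennreal (v r * v (u - r)) \<partial>lborel) = ennreal (v r) * (\<integral>\<^sup>+u. ennreal (v u) \<partial>lborel)"
        unfolding e using vnn by (subst nn_integral_cmult[symmetric]) (auto simp: ennreal_mult)
    qed
    also have "\<dots> = (\<integral>\<^sup>+r. ennreal (v r) \<partial>lborel) * (\<integral>\<^sup>+u. ennreal (v u) \<partial>lborel)"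
      by (rule nn_integral_multc) measurable
    also have "\<dots> < \<infinity>"
    proof -
      have b: "(\<integral>\<^sup>+x. ennreal (v x) \<partial>lborel) < \<infinity>"
        using vint vnn unfolding integrable_iff_bounded by simp
      show ?thesis using b by (simp add: ennreal_mult_less_top)
    qed
    finally show ?thesis .
  qed
  have Km: "(\<lambda>(r,u). v r * v (u - r)) \<in> borel_measurable (lborel \<Otimes>\<^sub>M lborel)" by measurable
  have Kint: "integrable (lborel \<Otimes>\<^sub>M lborel) (\<lambda>(r,u). v r * v (u - r))"
    by (rule fubini_nn_bound_real[OF Km]) (use fin0 vnn in simp)
  show "integrable lborel (\<lambda>u. \<integral>r. v r * v (u - r) \<partial>lborel)"
    using lborel_pair.integrable_snd[OF Kint] by simp
  define K where "K r u = complex_of_real (v r * v (u - r)) * iexp (x * u)" for r u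
  have KKm: "(\<lambda>(r,u). K r u) \<in> borel_measurable (lborel \<Otimes>\<^sub>M lborel)" unfolding K_def by measurable
  have finK: "(\<integral>\<^sup>+r. \<integral>\<^sup>+u. norm (K r u) \<partial>lborel \<partial>lborel) < \<infinity>"
    using fin0 vnn by (simp add: K_def norm_mult)
  define Fv where "Fv = (\<integral>r. complex_of_real (v r) * iexp (x * r) \<partial>lborel)"
  have "Fv * Fv = (\<integral>r. complex_of_real (v r) * iexp (x * r) * Fv \<partial>lborel)"
    unfolding Fv_def[of ] by (rule integral_mult_left_zero[symmetric])
  also have "\<dots> = (\<integral>r. (\<integral>u. K r u \<partial>lborel) \<partial>lborel)"
  proof (intro Bochner_Integration.integral_cong refl)
    fix r
    have "complex_of_real (v r) * iexp (x * r) * Fv = (\<integral>q. complex_of_real (v r) * iexp (x * r) * (complex_of_real (v q) * iexp (x * q)) \<partial>lborel)"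
      unfolding Fv_def by (rule integral_mult_right_zero[symmetric])
    also have "\<dots> = \<bar>1\<bar> *\<^sub>R (\<integral>u. complex_of_real (v r) * iexp (x * r) * (complex_of_real (v (-r + 1*u)) * iexp (x * (-r + 1*u))) \<partial>lborel)"
      by (rule lborel_integral_real_affine) simp
    also have "\<dots> = (\<integral>u. K r u \<partial>lborel)"
    proof -
      have "complex_of_real (v r) * iexp (x * r) * (complex_of_real (v (-r + 1*u)) * iexp (x * (-r + 1*u))) = K r u" for u
      proof -
        have "iexp (x * r) * iexp (x * (-r + 1*u)) = iexp (x * u)"
          by (metis iexp_mult_iexp add.commute add_0 add_minus_cancel distrib_left mult_1)
        then show ?thesis unfolding K_def
          by (simp add: algebra_simps)
      qed
      then show ?thesis by simp
    qed
    finally show "complex_of_real (v r) * iexp (x * r) * Fv = (\<integral>u. K r u \<partial>lborel)" .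
  qed
  also have "\<dots> = (\<integral>u. (\<integral>r. K r u \<partial>lborel) \<partial>lborel)"
    by (rule fubini_swap[OF KKm finK, symmetric])
  also have "\<dots> = (\<integral>u. complex_of_real (\<integral>r. v r * v (u - r) \<partial>lborel) * iexp (x * u) \<partial>lborel)"
    unfolding K_def integral_mult_left_zero integral_complex_of_real ..
  finally show "(\<integral>r. complex_of_real (v r) * iexp (x * r) \<partial>lborel) * (\<integral>r. complex_of_real (v r) * iexp (x * r) \<partial>lborel)
       = (\<integral>u. complex_of_real (\<integral>r. v r * v (u - r) \<partial>lborel) * iexp (x * u) \<partial>lborel)"
    unfolding Fv_def .
qed


definition vv :: "real \<Rightarrow> real \<Rightarrow> real" where
  "vv a r = (if \<bar>r\<bar> < 1/2 then (1 - 4*r\<^sup>2) powr (a - 1/2) else 0)"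

definition HH :: "real \<Rightarrow> real \<Rightarrow> real" where
  "HH a u = (\<integral>r. vv a r * vv a (u - r) \<partial>lborel)"

definition QQ :: "real \<Rightarrow> real \<Rightarrow> real" where
  "QQ u t = (1 - (1-u)*t) * (u + (1-u)*t)"

definition Phi :: "real \<Rightarrow> real \<Rightarrow> real" where
  "Phi a u = (\<integral>t. indicator {0..1} t * (t powr (a - 1/2) * (1-t) powr (a - 1/2) * QQ u t powr (a - 1/2)) \<partial>lborel)"

lemma vv_nonneg: "0 \<le> vv a r"
  by (simp add: vv_def)

lemma vv_even: "vv a (-r) = vv a r"
  by (simp add: vv_def)

lemma vv_measurable[measurable]: "vv a \<in> borel_measurable borel"
  unfolding vv_def[abs_def] by measurable

lemma vv_shift: "0 < t \<Longrightarrow> t < 1 \<Longrightarrow> vv a (t - 1/2) = 4 powr (a - 1/2) * (t powr (a - 1/2) * (1-t) powr (a - 1/2))"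
proof -
  assume t: "0 < t" "t < 1"
  have "\<bar>t - 1/2\<bar> < 1/2" using t by (auto split: abs_split)
  moreover have "1 - 4*(t - 1/2)\<^sup>2 = 4 * (t * (1 - t))" by (simp add: power2_eq_square algebra_simps)
  ultimately show ?thesis using t by (simp add: vv_def powr_mult)
qed

lemma vv_shift0: "\<not> (0 < t \<and> t < 1) \<Longrightarrow> vv a (t - 1/2) = 0"
  by (auto simp: vv_def split: abs_split)

lemma integrable_beta_ind:
  assumes "p > 0"
  shows "integrable lborel (\<lambda>t::real. indicator {0..1} t * (t powr (p - 1) * (1-t) powr (p - 1)))"
  using integrable_Beta[OF assms assms] unfolding set_integrable_def by simp

lemma vv_integrable:
  assumes "a > 0"
  shows "integrable lborel (vv a)"
proof -
  have "integrable lborel (\<lambda>t. 4 powr (a - 1/2) * (indicator {0..1} t * (t powr (a + 1/2 - 1) * (1-t) powr (a + 1/2 - 1))))"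
    by (intro integrable_mult_right integrable_beta_ind) (use assms in simp)
  also have "(\<lambda>t. 4 powr (a - 1/2) * (indicator {0..1} t * (t powr (a + 1/2 - 1) * (1-t) powr (a + 1/2 - 1)))) = (\<lambda>t. vv a (-1/2 + 1 * t))"
  proof
    fix t :: real
    show "4 powr (a - 1/2) * (indicator {0..1} t * (t powr (a + 1/2 - 1) * (1-t) powr (a + 1/2 - 1))) = vv a (-1/2 + 1 * t)"
      by (cases "0 < t \<and> t < 1") (auto simp: vv_shift vv_shift0 indicator_def)
  qed
  finally show ?thesis
    by (subst (asm) lborel_integrable_real_affine_iff) auto
qed

lemma HH_nonneg: "0 \<le> HH a u"
  unfolding HH_def by (intro integral_nonneg_AE AE_I2 mult_nonneg_nonneg vv_nonneg)

lemma HH_zero: "\<bar>u\<bar> \<ge> 1 \<Longrightarrow> HH a u = 0"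
proof -
  assume u: "\<bar>u\<bar> \<ge> 1"
  have "vv a r * vv a (u - r) = 0" for r
  proof -
    have "\<not> (\<bar>r\<bar> < 1/2 \<and> \<bar>u - r\<bar> < 1/2)" using u by (auto split: abs_split)
    then show ?thesis by (auto simp: vv_def)
  qed
  then have "(\<lambda>r. vv a r * vv a (u - r)) = (\<lambda>r. 0)" by (rule ext)
  then show ?thesis unfolding HH_def by simp
qed

lemma HH_even: "HH a (-u) = HH a u"
proof -
  have "HH a (-u) = \<bar>-1\<bar> *\<^sub>R (\<integral>q. vv a (0 + -1*q) * vv a (-u - (0 + -1*q)) \<partial>lborel)"
    unfolding HH_def by (rule lborel_integral_real_affine) simp
  also have "(\<lambda>q. vv a (0 + -1*q) * vv a (-u - (0 + -1*q))) = (\<lambda>q. vv a q * vv a (u - q))"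
  proof
    fix q
    have "vv a (-u - (0 + -1*q)) = vv a (-(u - q))" by simp
    then show "vv a (0 + -1*q) * vv a (-u - (0 + -1*q)) = vv a q * vv a (u - q)"
      by (simp only: vv_even) (simp add: vv_even[of a q, symmetric])
  qed
  finally show ?thesis unfolding HH_def by simp
qed

lemma HH_pointwise:
  assumes u: "0 \<le> u" "u < 1"
  shows "vv a (1/2 + -(1-u)*t) * vv a (u - (1/2 + -(1-u)*t))
       = 16 powr (a - 1/2) * (1-u) powr (2*(a - 1/2)) * (indicator {0..1} t * (t powr (a - 1/2) * (1-t) powr (a - 1/2) * QQ u t powr (a - 1/2)))"
proof -
  define b where "b = a - 1/2"
  consider "t \<le> 0" | "0 < t \<and> t < 1" | "1 \<le> t" by linarith
  then show ?thesis
  proof cases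
    case 1
    have gen: "\<not> \<bar>1/2 + z\<bar> < 1/2" if "0 \<le> z" for z :: real using that by (auto split: abs_split)
    have h: "0 \<le> -(1-u)*t" using 1 u by (simp add: mult_nonpos_nonpos)
    have "\<not> \<bar>1/2 + -(1-u)*t\<bar> < 1/2" by (rule gen[OF h])
    then have "vv a (1/2 + -(1-u)*t) = 0" by (simp add: vv_def)
    moreover have "indicator {0..1} t * (t powr (a - 1/2) * (1-t) powr (a - 1/2) * QQ u t powr (a - 1/2)) = 0"
      using 1 by (cases "t = 0") (auto simp: indicator_def)
    ultimately show ?thesis by simp
  next
    case 3
    have m: "(1-u)*t \<ge> (1-u)*1" using 3 u by (intro mult_left_mono) auto
    have gen: "\<not> \<bar>z\<bar> < 1/2" if "1/2 \<le> z" for z :: real using that by (auto split: abs_split)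
    have "1/2 \<le> u - (1/2 + -(1-u)*t)" using m by (simp add: algebra_simps)
    then have "\<not> \<bar>u - (1/2 + -(1-u)*t)\<bar> < 1/2" by (rule gen)
    then have "vv a (u - (1/2 + -(1-u)*t)) = 0" by (simp add: vv_def)
    moreover have "indicator {0..1} t * (t powr (a - 1/2) * (1-t) powr (a - 1/2) * QQ u t powr (a - 1/2)) = 0"
      using 3 by (cases "t = 1") (auto simp: indicator_def)
    ultimately show ?thesis by simp
  next
    case 2
    define w where "w = (1-u)*t"
    have p1: "0 < w" using 2 u by (simp add: w_def)
    have p2: "w < 1-u" using 2 u by (simp add: w_def)
    have p3: "w < 1" using p2 u by linarith
    have r1': "\<bar>1/2 - w\<bar> < 1/2" using p1 p3 by (auto split: abs_split)
    have r2': "\<bar>u - (1/2 - w)\<bar> < 1/2" using p1 p2 u by (auto split: abs_split)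
    have eq1: "1/2 + -(1-u)*t = 1/2 - w" unfolding w_def by (simp add: algebra_simps)
    have r1: "\<bar>1/2 + -(1-u)*t\<bar> < 1/2" unfolding eq1 by (rule r1')
    have r2: "\<bar>u - (1/2 + -(1-u)*t)\<bar> < 1/2" unfolding eq1 by (rule r2')
    have e1: "1 - 4*(1/2 + -(1-u)*t)\<^sup>2 = 4 * (1-u) * t * (1 - (1-u)*t)"
      by (simp add: power2_eq_square algebra_simps)
    have e2: "1 - 4*(u - (1/2 + -(1-u)*t))\<^sup>2 = 4 * (1-u) * (1-t) * (u + (1-u)*t)"
      by (simp add: power2_eq_square algebra_simps)
    have "vv a (1/2 + -(1-u)*t) * vv a (u - (1/2 + -(1-u)*t))
        = (4 * (1-u) * t * (1 - (1-u)*t)) powr b * (4 * (1-u) * (1-t) * (u + (1-u)*t)) powr b"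
      using r1 r2 by (simp only: vv_def if_True e1 e2 b_def)
    also have "\<dots> = ((4 * (1-u) * t * (1 - (1-u)*t)) * (4 * (1-u) * (1-t) * (u + (1-u)*t))) powr b"
      by (rule powr_mult[symmetric])
    also have "(4 * (1-u) * t * (1 - (1-u)*t)) * (4 * (1-u) * (1-t) * (u + (1-u)*t)) = 16 * ((1-u)*(1-u)) * (t*(1-t)*QQ u t)"
      by (simp add: QQ_def algebra_simps)
    also have "(16 * ((1-u)*(1-u)) * (t*(1-t)*QQ u t)) powr b = 16 powr b * ((1-u) powr b * (1-u) powr b) * (t powr b * (1-t) powr b * QQ u t powr b)"
      by (simp only: powr_mult)
    also have "(1-u) powr b * (1-u) powr b = (1-u) powr (2*b)"
      by (simp add: powr_add[symmetric])
    finally show ?thesis using 2 by (simp add: b_def indicator_def)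
  qed
qed

lemma HH_formula:
  assumes u: "0 \<le> u" "u < 1"
  shows "HH a u = 16 powr (a - 1/2) * (1-u) powr (2*a) * Phi a u"
proof -
  have "HH a u = \<bar>-(1-u)\<bar> *\<^sub>R (\<integral>t. vv a (1/2 + -(1-u)*t) * vv a (u - (1/2 + -(1-u)*t)) \<partial>lborel)"
    unfolding HH_def by (rule lborel_integral_real_affine) (use u in simp)
  also have "(\<lambda>t. vv a (1/2 + -(1-u)*t) * vv a (u - (1/2 + -(1-u)*t)))
      = (\<lambda>t. 16 powr (a - 1/2) * (1-u) powr (2*(a - 1/2)) * (indicator {0..1} t * (t powr (a - 1/2) * (1-t) powr (a - 1/2) * QQ u t powr (a - 1/2))))"
    by (rule ext) (rule HH_pointwise[OF u])
  also have "\<bar>-(1-u)\<bar> *\<^sub>R (\<integral>t. 16 powr (a - 1/2) * (1-u) powr (2*(a - 1/2)) * (indicator {0..1} t * (t powr (a - 1/2) * (1-t) powr (a - 1/2) * QQ u t powr (a - 1/2))) \<partial>lborel)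
      = (1-u) * (16 powr (a - 1/2) * (1-u) powr (2*(a - 1/2)) * Phi a u)"
    unfolding Phi_def using u by (simp del: integral_mult_right integral_mult_right_zero add: integral_mult_right_zero)
  finally have calc: "HH a u = (1-u) * (16 powr (a - 1/2) * (1-u) powr (2*(a - 1/2)) * Phi a u)" .
  have "(1-u) powr (2*a) = (1-u) powr (1 + 2*(a - 1/2))" by (simp add: algebra_simps)
  also have "\<dots> = (1-u) powr 1 * (1-u) powr (2*(a - 1/2))" by (rule powr_add)
  also have "(1-u) powr 1 = 1-u" using u by simp
  finally have pw: "(1-u) powr (2*a) = (1-u) * (1-u) powr (2*(a - 1/2))" .
  show ?thesis unfolding calc pw by (simp add: mult_ac)
qed


definition PI :: "real \<Rightarrow> real \<Rightarrow> real \<Rightarrow> real" where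
  "PI a u t = indicator {0..1} t * (t powr (a - 1/2) * (1-t) powr (a - 1/2) * QQ u t powr (a - 1/2))"

definition DD :: "real \<Rightarrow> real \<Rightarrow> real" where
  "DD a t = indicator {0..1} t * (t powr (a - 1/2) * (1-t) powr (a - 1/2) + t powr (2*a - 1) * (1-t) powr (2*a - 1))"

lemma Phi_PI: "Phi a u = (\<integral>t. PI a u t \<partial>lborel)"
  unfolding Phi_def PI_def ..

lemma PI_nonneg: "0 \<le> PI a u t"
  unfolding PI_def by (simp add: indicator_def)

lemma DD_nonneg: "0 \<le> DD a t"
  unfolding DD_def by (simp add: indicator_def)

lemma PI_zero: "\<not> (0 < t \<and> t < 1) \<Longrightarrow> PI a u t = 0"
  unfolding PI_def by (cases "t = 0 \<or> t = 1") (auto simp: indicator_def)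

lemma DD_integrable: "a > 0 \<Longrightarrow> integrable lborel (DD a)"
proof -
  assume a: "a > 0"
  have i1: "integrable lborel (\<lambda>t::real. indicator {0..1} t * (t powr (a + 1/2 - 1) * (1-t) powr (a + 1/2 - 1)))"
    by (rule integrable_beta_ind) (use a in simp)
  have i2: "integrable lborel (\<lambda>t::real. indicator {0..1} t * (t powr (2*a - 1) * (1-t) powr (2*a - 1)))"
    by (rule integrable_beta_ind) (use a in simp)
  have "integrable lborel (\<lambda>t::real. indicator {0..1} t * (t powr (a + 1/2 - 1) * (1-t) powr (a + 1/2 - 1)) + indicator {0..1} t * (t powr (2*a - 1) * (1-t) powr (2*a - 1)))"
    by (rule Bochner_Integration.integrable_add[OF i1 i2])
  also have "(\<lambda>t::real. indicator {0..1} t * (t powr (a + 1/2 - 1) * (1-t) powr (a + 1/2 - 1)) + indicator {0..1} t * (t powr (2*a - 1) * (1-t) powr (2*a - 1))) = DD a"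
    by (rule ext) (simp add: DD_def distrib_left)
  finally show ?thesis .
qed

lemma QQ_bounds:
  assumes "0 \<le> u" "u \<le> 1" "0 \<le> t" "t \<le> 1"
  shows "t * (1-t) \<le> QQ u t" "QQ u t \<le> 1"
proof -
  have f1: "1 - t \<le> 1 - (1-u)*t" using assms mult_left_le_one_le[of t "1-u"] by (simp add: mult.commute)
  have f1': "1 - (1-u)*t \<le> 1" using assms by simp
  have f2: "t \<le> u + (1-u)*t" using assms by (simp add: algebra_simps mult_left_le_one_le)
  have f2': "u + (1-u)*t \<le> 1"
  proof -
    have "(1-u)*t \<le> (1-u)*1" using assms by (intro mult_left_mono) auto
    then show ?thesis by simp
  qed
  show "t * (1-t) \<le> QQ u t" unfolding QQ_def
    using mult_mono[OF f2 f1] assms by (simp add: mult.commute)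
  show "QQ u t \<le> 1" unfolding QQ_def
    using assms f1 f2 f1' f2' by (intro mult_le_one) auto
qed

lemma PI_bound:
  assumes a: "a > 0" and u: "0 \<le> u" "u \<le> 1"
  shows "PI a u t \<le> DD a t"
proof (cases "0 < t \<and> t < 1")
  case False
  then show ?thesis using PI_zero DD_nonneg by simp
next
  case True
  define b where "b = a - 1/2"
  define X where "X = t * (1-t)"
  have X0: "0 < X" using True by (simp add: X_def)
  have QX: "X \<le> QQ u t" "QQ u t \<le> 1" using QQ_bounds[OF u, of t] True by (auto simp: X_def)
  have tt: "t powr b * (1-t) powr b = X powr b" unfolding X_def by (rule powr_mult[symmetric])
  have tt2: "t powr (2*a - 1) * (1-t) powr (2*a - 1) = X powr b * X powr b"
  proof -
    have "t powr (2*a - 1) * (1-t) powr (2*a - 1) = X powr (2*a - 1)" unfolding X_def by (rule powr_mult[symmetric])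
    also have "\<dots> = X powr (b + b)" by (simp add: b_def)
    also have "\<dots> = X powr b * X powr b" by (rule powr_add)
    finally show ?thesis .
  qed
  have Xb0: "0 \<le> X powr b" by simp
  have "PI a u t = X powr b * QQ u t powr b" using True tt by (simp add: PI_def b_def)
  also have "\<dots> \<le> X powr b + X powr b * X powr b"
  proof (cases "b \<ge> 0")
    case True
    have "QQ u t powr b \<le> 1 powr b" using QX X0 True by (intro powr_mono2) auto
    then have "X powr b * QQ u t powr b \<le> X powr b * 1" using Xb0 by (intro mult_left_mono) auto
    then show ?thesis using mult_nonneg_nonneg[OF Xb0 Xb0] Xb0 by linarith
  next
    case False
    have "QQ u t powr b \<le> X powr b" using QX X0 False by (intro powr_mono2') auto
    then have "X powr b * QQ u t powr b \<le> X powr b * X powr b" using Xb0 by (intro mult_left_mono) auto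
    then show ?thesis using mult_nonneg_nonneg[OF Xb0 Xb0] Xb0 by linarith
  qed
  also have "\<dots> = DD a t" using True tt tt2 by (simp add: DD_def b_def)
  finally show ?thesis .
qed

lemma Phi_nonneg: "0 \<le> Phi a u"
  unfolding Phi_PI by (intro integral_nonneg_AE AE_I2 PI_nonneg)

lemma PI_measurable[measurable]: "(\<lambda>t. PI a u t) \<in> borel_measurable borel"
  unfolding PI_def QQ_def by measurable

lemma Phi_bound:
  assumes a: "a > 0" and u: "0 \<le> u" "u \<le> 1"
  shows "Phi a u \<le> (\<integral>t. DD a t \<partial>lborel)"
  unfolding Phi_PI
proof (rule integral_mono)
  show "integrable lborel (DD a)" by (rule DD_integrable[OF a])
  show "integrable lborel (PI a u)"
    by (rule Bochner_Integration.integrable_bound[OF DD_integrable[OF a]])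
       (use PI_bound[OF a u] PI_nonneg DD_nonneg in auto)
  show "PI a u t \<le> DD a t" for t by (rule PI_bound[OF a u])
qed

lemma Phi_cont:
  assumes a: "a > 0"
  shows "continuous_on {0..1} (Phi a)"
proof (rule continuous_on_sequentiallyI)
  fix x :: "nat \<Rightarrow> real" and u
  assume x: "\<forall>n. x n \<in> {0..1}" and u: "u \<in> {0..1}" and lim: "x \<longlonglongrightarrow> u"
  show "(\<lambda>n. Phi a (x n)) \<longlonglongrightarrow> Phi a u"
    unfolding Phi_PI
  proof (rule integral_dominated_convergence[where w="DD a"])
    show "integrable lborel (DD a)" by (rule DD_integrable[OF a])
    show "AE t in lborel. norm (PI a (x n) t) \<le> DD a t" for n
      using PI_bound[OF a, of "x n"] x PI_nonneg by (intro AE_I2) auto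
    show "AE t in lborel. (\<lambda>n. PI a (x n) t) \<longlonglongrightarrow> PI a u t"
    proof (rule AE_I2)
      fix t :: real
      show "(\<lambda>n. PI a (x n) t) \<longlonglongrightarrow> PI a u t"
      proof (cases "0 < t \<and> t < 1")
        case False
        then show ?thesis using PI_zero by simp
      next
        case True
        have Qpos: "0 < QQ u t"
          using QQ_bounds[of u t] u True by (smt (verit) atLeastAtMost_iff mult_pos_pos)
        have "(\<lambda>n. QQ (x n) t) \<longlonglongrightarrow> QQ u t"
          unfolding QQ_def by (intro tendsto_intros lim)
        then have qlim: "(\<lambda>n. QQ (x n) t powr (a - 1/2)) \<longlonglongrightarrow> QQ u t powr (a - 1/2)"
          using Qpos by (intro tendsto_powr tendsto_const) auto
        show ?thesis unfolding PI_def by (intro tendsto_mult tendsto_const qlim)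
      qed
    qed
  qed measurable
qed

lemma Phi_one:
  assumes a: "a > 0"
  shows "Phi a 1 = Beta (a + 1/2) (a + 1/2)"
proof -
  have "Phi a 1 = (\<integral>t. indicator {0..1} t *\<^sub>R (t powr (a + 1/2 - 1) * (1-t) powr (a + 1/2 - 1)) \<partial>lborel)"
    unfolding Phi_def QQ_def by simp
  also have "\<dots> = integral {0..1} (\<lambda>t. t powr (a + 1/2 - 1) * (1-t) powr (a + 1/2 - 1))"
    using set_borel_integral_eq_integral(2)[OF integrable_Beta[of "a + 1/2" "a + 1/2"]] a
    by (simp add: set_lebesgue_integral_def)
  also have "\<dots> = Beta (a + 1/2) (a + 1/2)"
    by (rule integral_unique[OF has_integral_Beta_real]) (use a in simp)+
  finally show ?thesis .
qed


definition Hx :: "real \<Rightarrow> real \<Rightarrow> real" where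
  "Hx a u = 16 powr (a - 1/2) * (max 0 (1 - \<bar>u\<bar>)) powr (2*a) * Phi a (min 1 \<bar>u\<bar>)"

lemma HH_Hx: "HH a u = Hx a u"
proof (cases "\<bar>u\<bar> < 1")
  case False
  then show ?thesis by (simp add: HH_zero Hx_def)
next
  case True
  have "HH a u = HH a \<bar>u\<bar>"
    by (cases "u \<ge> 0") (auto simp: HH_even[of a u, symmetric])
  also have "\<dots> = 16 powr (a - 1/2) * (1 - \<bar>u\<bar>) powr (2*a) * Phi a \<bar>u\<bar>"
    by (rule HH_formula) (use True in auto)
  also have "\<dots> = Hx a u" using True by (simp add: Hx_def)
  finally show ?thesis .
qed

lemma HH_cont_on:
  assumes a: "a > 0"
  shows "continuous_on UNIV (HH a)"
proof -
  have "continuous_on UNIV (\<lambda>u. Phi a (min 1 \<bar>u\<bar>))"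
    by (rule continuous_on_compose2[OF Phi_cont[OF a]]) (auto intro!: continuous_intros)
  moreover have "continuous_on UNIV (\<lambda>u::real. (max 0 (1 - \<bar>u\<bar>)) powr (2*a))"
    using a by (intro continuous_on_powr' continuous_intros) auto
  ultimately have "continuous_on UNIV (Hx a)"
    unfolding Hx_def[abs_def] by (intro continuous_on_mult continuous_on_const)
  moreover have "HH a = Hx a" by (rule ext) (rule HH_Hx)
  ultimately show ?thesis by simp
qed

lemma HH_isCont: "a > 0 \<Longrightarrow> isCont (HH a) u"
  using HH_cont_on continuous_on_eq_continuous_at open_UNIV UNIV_I by blast

lemma HH_measurable: "a > 0 \<Longrightarrow> HH a \<in> borel_measurable borel"
  by (rule borel_measurable_continuous_onI[OF HH_cont_on])

lemma HH_bound_gen: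
  assumes a: "a > 0" and "0 \<le> w" and "max 0 (1 - \<bar>u\<bar>) \<le> w"
  shows "HH a u \<le> 16 powr (a - 1/2) * (\<integral>t. DD a t \<partial>lborel) * w powr (2*a)"
proof -
  have p1: "(max 0 (1 - \<bar>u\<bar>)) powr (2*a) \<le> w powr (2*a)"
    using assms by (intro powr_mono2) auto
  have p2: "Phi a (min 1 \<bar>u\<bar>) \<le> (\<integral>t. DD a t \<partial>lborel)"
    by (rule Phi_bound[OF a]) auto
  have "HH a u = 16 powr (a - 1/2) * ((max 0 (1 - \<bar>u\<bar>)) powr (2*a) * Phi a (min 1 \<bar>u\<bar>))"
    by (simp add: HH_Hx Hx_def)
  also have "\<dots> \<le> 16 powr (a - 1/2) * (w powr (2*a) * (\<integral>t. DD a t \<partial>lborel))"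
    by (intro mult_left_mono mult_mono p1 p2 Phi_nonneg) auto
  finally show ?thesis by (simp add: mult_ac)
qed

lemma HH_bound:
  assumes a: "a > 0"
  shows "HH a u \<le> 16 powr (a - 1/2) * (\<integral>t. DD a t \<partial>lborel)"
  using HH_bound_gen[OF a, of 1 u] by simp

lemma HH_bound_edge:
  assumes a: "a > 0" and u: "u < 1"
  shows "HH a u \<le> 16 powr (a - 1/2) * (\<integral>t. DD a t \<partial>lborel) * (1 - u) powr (2*a)"
  by (rule HH_bound_gen[OF a]) (use u in auto)

lemma HH_integrable: "a > 0 \<Longrightarrow> integrable lborel (HH a)"
  using conv_square(1)[OF vv_measurable vv_integrable vv_nonneg] unfolding HH_def[abs_def] by simp

definition EE :: "real \<Rightarrow> real \<Rightarrow> real" where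
  "EE a x = (\<integral>r. vv a r * cos (x * r) \<partial>lborel)"

lemma EE_complex:
  assumes a: "a > 0"
  shows "complex_of_real (EE a x) = (\<integral>r. complex_of_real (vv a r) * iexp (x * r) \<partial>lborel)"
proof -
  have ic: "integrable lborel (\<lambda>r. vv a r * cos (x * r))"
    by (rule Bochner_Integration.integrable_bound[OF vv_integrable[OF a]]) (auto simp: abs_mult vv_nonneg intro!: AE_I2 mult_left_le)
  have isn: "integrable lborel (\<lambda>r. vv a r * sin (x * r))"
    by (rule Bochner_Integration.integrable_bound[OF vv_integrable[OF a]]) (auto simp: abs_mult vv_nonneg intro!: AE_I2 mult_left_le)
  have s0: "(\<integral>r. vv a r * sin (x * r) \<partial>lborel) = 0"
  proof -
    have "(\<integral>r. vv a r * sin (x * r) \<partial>lborel) = \<bar>-1\<bar> *\<^sub>R (\<integral>r. vv a (0 + -1*r) * sin (x * (0 + -1*r)) \<partial>lborel)"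
      by (rule lborel_integral_real_affine) simp
    also have "\<dots> = - (\<integral>r. vv a r * sin (x * r) \<partial>lborel)"
      by (simp add: vv_even)
    finally show ?thesis by simp
  qed
  have "(\<integral>r. complex_of_real (vv a r) * iexp (x * r) \<partial>lborel)
      = (\<integral>r. complex_of_real (vv a r * cos (x * r)) + \<i> * complex_of_real (vv a r * sin (x * r)) \<partial>lborel)"
    by (intro Bochner_Integration.integral_cong refl) (simp add: complex_eq_iff Re_exp Im_exp)
  also have "\<dots> = complex_of_real (\<integral>r. vv a r * cos (x * r) \<partial>lborel) + \<i> * complex_of_real (\<integral>r. vv a r * sin (x * r) \<partial>lborel)"
  proof -
    have ic': "integrable lborel (\<lambda>r. complex_of_real (vv a r * cos (x * r)))" by (rule integrable_of_real[OF ic])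
    have is': "integrable lborel (\<lambda>r. \<i> * complex_of_real (vv a r * sin (x * r)))"
      by (rule integrable_mult_right[OF integrable_of_real[OF isn]])
    have "(\<integral>r. complex_of_real (vv a r * cos (x * r)) + \<i> * complex_of_real (vv a r * sin (x * r)) \<partial>lborel)
        = (\<integral>r. complex_of_real (vv a r * cos (x * r)) \<partial>lborel) + (\<integral>r. \<i> * complex_of_real (vv a r * sin (x * r)) \<partial>lborel)"
      by (rule Bochner_Integration.integral_add[OF ic' is'])
    then show ?thesis unfolding integral_mult_right_zero integral_complex_of_real .
  qed
  finally show ?thesis using s0 by (simp add: EE_def)
qed

lemma EE_square:
  assumes a: "a > 0"
  shows "complex_of_real ((EE a x)\<^sup>2) = (\<integral>u. complex_of_real (HH a u) * iexp (x * u) \<partial>lborel)"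
  using conv_square(2)[OF vv_measurable vv_integrable[OF a] vv_nonneg, of x]
  unfolding EE_complex[OF a, symmetric] HH_def[symmetric] by (simp add: power2_eq_square)

lemma EE_fourier:
  assumes a: "a > 0"
  shows "integrable lborel (\<lambda>x. (EE a x)\<^sup>2)"
    and "(\<integral>x. complex_of_real ((EE a x)\<^sup>2) * iexp (- (\<xi> * x)) \<partial>lborel) = complex_of_real (2*pi*HH a \<xi>)"
  using inversion[OF HH_measurable[OF a] HH_integrable[OF a] HH_nonneg HH_bound[OF a] HH_isCont[OF a] EE_square[OF a]]
  by auto


lemma moment_half:
  assumes a: "a > 0"
  shows "(\<integral>\<^sup>+r. ennreal (vv a r * r^(2*m)) * indicator {0..1/2} r \<partial>lborel)
       = ennreal (Beta (real m + 1/2) (a + 1/2) / 4^(m+1))"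
proof -
  define F where "F u = u powr (real m + 1/2 - 1) * (1-u) powr (a + 1/2 - 1)" for u :: real
  define g where "g r = 4 * r\<^sup>2" for r :: real
  define g' where "g' r = 8 * r" for r :: real
  have Fm[measurable]: "F \<in> borel_measurable borel" unfolding F_def by measurable
  have sub: "(\<integral>\<^sup>+x. F x * indicator {g 0..g (1/2)} x \<partial>lborel) = (\<integral>\<^sup>+x. F (g x) * g' x * indicator {0..1/2} x \<partial>lborel)"
  proof (rule nn_integral_substitution)
    show "(g has_real_derivative g' x) (at x)" for x
      unfolding g_def g'_def by (auto intro!: derivative_eq_intros)
    show "continuous_on {0..1/2} g'" unfolding g'_def by (intro continuous_intros)
    show "set_borel_measurable borel {g 0..g (1/2)} F"
      unfolding set_borel_measurable_def by measurable
  qed (auto simp: g'_def)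
  have gg: "g 0 = 0" "g (1/2) = 1" by (auto simp: g_def power2_eq_square)
  have lhs: "(\<integral>\<^sup>+x. F x * indicator {0..1} x \<partial>lborel) = ennreal (Beta (real m + 1/2) (a + 1/2))"
  proof -
    have "((\<lambda>x. F x * indicator {0..1} x) has_integral Beta (real m + 1/2) (a + 1/2)) UNIV"
    proof -
      have "(F has_integral Beta (real m + 1/2) (a + 1/2)) {0..1}"
        unfolding F_def by (rule has_integral_Beta_real) (use a in auto)
      then have "((\<lambda>x. if x \<in> {0..1} then F x else 0) has_integral Beta (real m + 1/2) (a + 1/2)) UNIV"
        by (subst has_integral_restrict_UNIV)
      also have "(\<lambda>x. if x \<in> {0..1} then F x else 0) = (\<lambda>x. F x * indicator {0..1} x)"
        by (auto simp: indicator_def fun_eq_iff)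
      finally show ?thesis .
    qed
    then have "integral\<^sup>N lborel (\<lambda>x. F x * indicator {0..1} x) = Beta (real m + 1/2) (a + 1/2)"
      by (rule nn_integral_has_integral_lborel[rotated 2]) (auto simp: F_def)
    then show ?thesis by simp
  qed
  have pw: "F (g x) * g' x * indicator {0..1/2} x = 4^(m+1) * (vv a x * x^(2*m) * indicator {0..1/2} x)" if "x \<noteq> 0" for x
  proof (cases "0 < x \<and> x < 1/2")
    case True
    have x2: "\<bar>x\<bar> < 1/2" using True by simp
    have s: "sqrt (4 * x\<^sup>2) = 2 * x" using True by (simp add: real_sqrt_mult)
    have "(4 * x\<^sup>2) powr (real m + 1/2 - 1) = (4 * x\<^sup>2) powr (real m) / (4 * x\<^sup>2) powr (1/2)"
      by (simp add: powr_diff[symmetric])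
    also have "\<dots> = (4 * x\<^sup>2)^m / (2 * x)"
      using True by (simp add: powr_realpow powr_half_sqrt s)
    finally have p: "(4 * x\<^sup>2) powr (real m + 1/2 - 1) = (4 * x\<^sup>2)^m / (2 * x)" .
    have "F (g x) * g' x = (4 * x\<^sup>2)^m / (2 * x) * (1 - 4*x\<^sup>2) powr (a - 1/2) * (8 * x)"
      unfolding F_def g_def g'_def p by simp
    also have "\<dots> = 4^(m+1) * ((1 - 4*x\<^sup>2) powr (a - 1/2) * x^(2*m))"
    proof -
      have xx: "(x^2)^m = (x^m)^2" by (metis power_mult mult.commute)
      show ?thesis using True by (simp add: power_mult_distrib power_mult field_simps xx)
    qed
    finally show ?thesis using True x2 by (simp add: vv_def indicator_def)
  next
    case False
    show ?thesis
    proof (cases "x = 1/2")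
      case True
      have "F (g (1/2)) = 0" by (simp add: F_def g_def power2_eq_square)
      then show ?thesis unfolding True by (simp add: vv_def)
    next
      case False
      with \<open>\<not> (0 < x \<and> x < 1/2)\<close> that show ?thesis by (auto simp: indicator_def)
    qed
  qed
  have "ennreal (Beta (real m + 1/2) (a + 1/2)) = (\<integral>\<^sup>+x. F (g x) * g' x * indicator {0..1/2} x \<partial>lborel)"
    using sub gg lhs by simp
  also have "\<dots> = (\<integral>\<^sup>+x. ennreal (4^(m+1)) * (ennreal (vv a x * x^(2*m)) * indicator {0..1/2} x) \<partial>lborel)"
  proof (rule nn_integral_cong_AE)
    show "AE x in lborel. ennreal (F (g x) * g' x * indicator {0..1/2} x) = ennreal (4^(m+1)) * (ennreal (vv a x * x^(2*m)) * indicator {0..1/2} x)"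
      using AE_lborel_singleton[of 0]
    proof eventually_elim
      case (elim x)
      show ?case unfolding pw[OF elim]
        by (simp add: ennreal_mult' vv_nonneg indicator_def)
    qed
  qed
  also have "\<dots> = ennreal (4^(m+1)) * (\<integral>\<^sup>+x. ennreal (vv a x * x^(2*m)) * indicator {0..1/2} x \<partial>lborel)"
    by (rule nn_integral_cmult) measurable
  finally have "ennreal (Beta (real m + 1/2) (a + 1/2)) = ennreal (4^(m+1)) * (\<integral>\<^sup>+x. ennreal (vv a x * x^(2*m)) * indicator {0..1/2} x \<partial>lborel)" .
  then have "ennreal (1 / 4^(m+1)) * ennreal (Beta (real m + 1/2) (a + 1/2))
      = (ennreal (1 / 4^(m+1)) * ennreal (4^(m+1))) * (\<integral>\<^sup>+x. ennreal (vv a x * x^(2*m)) * indicator {0..1/2} x \<partial>lborel)"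
    by (simp add: mult.assoc)
  also have "ennreal (1 / 4^(m+1)) * ennreal (4^(m+1)) = 1"
    by (simp add: ennreal_mult[symmetric])
  also have "ennreal (1 / 4^(m+1)) * ennreal (Beta (real m + 1/2) (a + 1/2)) = ennreal (Beta (real m + 1/2) (a + 1/2) / 4^(m+1))"
    by (subst ennreal_mult[symmetric]) (use a in \<open>auto simp: Beta_def intro!: divide_nonneg_nonneg mult_nonneg_nonneg less_imp_le[OF Gamma_real_pos]\<close>)
  finally show ?thesis by simp
qed


lemma moment:
  assumes a: "a > 0"
  shows "has_bochner_integral lborel (\<lambda>r. vv a r * r^(2*m)) (Beta (real m + 1/2) (a + 1/2) / (2 * 4^m))"
proof (rule has_bochner_integral_nn_integral)
  show "(\<lambda>r. vv a r * r^(2*m)) \<in> borel_measurable lborel" by measurable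
  show "AE x in lborel. 0 \<le> vv a x * x^(2*m)"
    by (intro AE_I2 mult_nonneg_nonneg vv_nonneg) (simp add: power_mult)
  show "0 \<le> Beta (real m + 1/2) (a + 1/2) / (2 * 4^m)"
    using a by (auto simp: Beta_def intro!: divide_nonneg_nonneg mult_nonneg_nonneg less_imp_le[OF Gamma_real_pos])
  define f where "f r = vv a r * r^(2*m)" for r
  have fe: "f (-r) = f r" for r by (simp add: f_def vv_even power_mult)
  have "(\<integral>\<^sup>+r. ennreal (f r) \<partial>lborel)
      = (\<integral>\<^sup>+r. ennreal (f r) * indicator {0..1/2} r + ennreal (f (-r)) * indicator {0..1/2} (-r) \<partial>lborel)"
  proof (rule nn_integral_cong_AE)
    show "AE r in lborel. ennreal (f r) = ennreal (f r) * indicator {0..1/2} r + ennreal (f (-r)) * indicator {0..1/2} (-r)"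
      using AE_lborel_singleton[of 0]
    proof eventually_elim
      case (elim r)
      have z: "\<not> \<bar>r\<bar> < 1/2 \<Longrightarrow> f r = 0" by (simp add: f_def vv_def)
      show ?case using elim fe[of r] z by (auto simp: indicator_def)
    qed
  qed
  also have "\<dots> = (\<integral>\<^sup>+r. ennreal (f r) * indicator {0..1/2} r \<partial>lborel) + (\<integral>\<^sup>+r. ennreal (f (-r)) * indicator {0..1/2} (-r) \<partial>lborel)"
    by (rule nn_integral_add) (auto simp: f_def)
  also have "(\<integral>\<^sup>+r. ennreal (f (-r)) * indicator {0..1/2} (-r) \<partial>lborel) = (\<integral>\<^sup>+r. ennreal (f r) * indicator {0..1/2} r \<partial>lborel)"
    using nn_integral_real_affine[of "\<lambda>r. ennreal (f r) * indicator {0..1/2} r" "-1" 0] by (simp add: f_def)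
  also have "(\<integral>\<^sup>+r. ennreal (f r) * indicator {0..1/2} r \<partial>lborel) = ennreal (Beta (real m + 1/2) (a + 1/2) / 4^(m+1))"
    unfolding f_def by (rule moment_half[OF a])
  also have "ennreal (Beta (real m + 1/2) (a + 1/2) / 4^(m+1)) + ennreal (Beta (real m + 1/2) (a + 1/2) / 4^(m+1))
      = ennreal (Beta (real m + 1/2) (a + 1/2) / (2 * 4^m))"
  proof -
    have B0: "0 \<le> Beta (real m + 1/2) (a + 1/2)"
      using a by (auto simp: Beta_def intro!: divide_nonneg_nonneg mult_nonneg_nonneg less_imp_le[OF Gamma_real_pos])
    have "ennreal (Beta (real m + 1/2) (a + 1/2) / 4^(m+1)) + ennreal (Beta (real m + 1/2) (a + 1/2) / 4^(m+1))
        = ennreal (Beta (real m + 1/2) (a + 1/2) / 4^(m+1) + Beta (real m + 1/2) (a + 1/2) / 4^(m+1))"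
      using B0 by (subst ennreal_plus[symmetric]) auto
    also have "Beta (real m + 1/2) (a + 1/2) / 4^(m+1) + Beta (real m + 1/2) (a + 1/2) / 4^(m+1) = Beta (real m + 1/2) (a + 1/2) / (2 * 4^m)"
      by (simp add: field_simps)
    finally show ?thesis .
  qed
  finally show "(\<integral>\<^sup>+r. ennreal (vv a r * r^(2*m)) \<partial>lborel) = ennreal (Beta (real m + 1/2) (a + 1/2) / (2 * 4^m))"
    unfolding f_def .
qed

lemma pos_not_nonpos_Int: "(x::real) > 0 \<Longrightarrow> x \<notin> \<int>\<^sub>\<le>\<^sub>0"
  by (auto elim!: nonpos_Ints_cases)

lemma Gamma_half_nat: "Gamma (real m + 1/2) = fact (2*m) * sqrt pi / (4^m * fact m)"
proof (induction m)
  case 0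
  then show ?case by (simp add: Gamma_one_half_real)
next
  case (Suc m)
  have "Gamma (real (Suc m) + 1/2) = Gamma ((real m + 1/2) + 1)" by (simp add: algebra_simps)
  also have "\<dots> = (real m + 1/2) * Gamma (real m + 1/2)"
    by (rule Gamma_plus1) (rule pos_not_nonpos_Int, simp)
  also have "\<dots> = (real m + 1/2) * (fact (2*m) * sqrt pi / (4^m * fact m))" using Suc by simp
  also have "\<dots> = fact (2 * Suc m) * sqrt pi / (4^Suc m * fact (Suc m))"
  proof -
    have e0: "2 * Suc m = Suc (Suc (2*m))" by simp
    have e1: "(fact (2 * Suc m) :: real) = (real m + 1) * (2 * ((2*real m + 1) * fact (2*m)))"
      unfolding e0 fact_Suc by (simp add: algebra_simps)
    have e2: "(fact (Suc m) :: real) = (real m + 1) * fact m" by (simp add: fact_Suc algebra_simps)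
    have nz: "real m + 1 \<noteq> 0" by linarith
    have "fact (2 * Suc m) * sqrt pi / (4^Suc m * fact (Suc m))
        = ((real m + 1) * (2 * ((2*real m + 1) * fact (2*m)) * sqrt pi)) / ((real m + 1) * (4^Suc m * fact m))"
      unfolding e1 e2 by (simp only: mult_ac)
    also have "\<dots> = (2 * ((2*real m + 1) * fact (2*m)) * sqrt pi) / (4^Suc m * fact m)"
      by (rule mult_divide_mult_cancel_left[OF nz])
    also have "\<dots> = (real m + 1/2) * (fact (2*m) * sqrt pi / (4^m * fact m))"
      by (simp add: field_simps)
    finally show ?thesis by simp
  qed
  finally show ?case .
qed


lemma summable_even_exp: "summable (\<lambda>m. (y::real)^(2*m) / fact (2*m))"
proof (rule summable_comparison_test[where g="\<lambda>m. inverse (fact m) * (y\<^sup>2)^m"])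
  show "summable (\<lambda>m. inverse (fact m) * (y\<^sup>2)^m)" by (rule summable_exp)
  show "\<exists>N. \<forall>n\<ge>N. norm (y^(2*n) / fact (2*n)) \<le> inverse (fact n) * (y\<^sup>2)^n"
  proof (intro exI allI impI)
    fix n :: nat
    have y0: "0 \<le> (y\<^sup>2)^n" by simp
    have f: "(fact n :: real) \<le> fact (2*n)" by (rule fact_mono) simp
    have "y^(2*n) / fact (2*n) \<le> (y\<^sup>2)^n / fact n"
      unfolding power_mult by (rule divide_left_mono[OF f y0]) simp
    then show "norm (y^(2*n) / fact (2*n)) \<le> inverse (fact n) * (y\<^sup>2)^n"
      by (simp add: power_mult field_simps)
  qed
qed

lemma EE_series:
  assumes a: "a > 0"
  shows "(\<lambda>m. (-1)^m / fact (2*m) * x^(2*m) * (Beta (real m + 1/2) (a + 1/2) / (2 * 4^m))) sums EE a x"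
proof -
  define c where "c m = (-1)^m / fact (2*m) * x^(2*m)" for m :: nat
  define f where "f m r = c m * (vv a r * r^(2*m))" for m r
  have fm: "f m r = vv a r * ((-1)^m / fact (2*m) * (x*r)^(2*m))" for m r
    by (simp add: f_def c_def power_mult_distrib)
  have mom: "has_bochner_integral lborel (\<lambda>r. vv a r * r^(2*m)) (Beta (real m + 1/2) (a + 1/2) / (2 * 4^m))" for m
    by (rule moment[OF a])
  have momI: "integrable lborel (\<lambda>r. vv a r * r^(2*m))" for m
    using mom[of m] by (simp add: has_bochner_integral_iff)
  have momE: "(\<integral>r. vv a r * r^(2*m) \<partial>lborel) = Beta (real m + 1/2) (a + 1/2) / (2 * 4^m)" for m
    using mom[of m] by (simp add: has_bochner_integral_iff)
  have fint: "integrable lborel (f m)" for m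
    unfolding f_def[abs_def] by (intro integrable_mult_right momI)
  have fI: "integral\<^sup>L lborel (f m) = c m * (Beta (real m + 1/2) (a + 1/2) / (2 * 4^m))" for m
    unfolding f_def by (simp add: momE)
  have vbound: "vv a r * r^(2*m) \<le> vv a r" for r m
  proof (cases "\<bar>r\<bar> < 1/2")
    case True
    have "r^(2*m) = (r\<^sup>2)^m" by (simp add: power_mult)
    also have "\<dots> \<le> 1"
    proof -
      have "r\<^sup>2 \<le> 1" using True by (simp add: abs_square_le_1)
      then show ?thesis by (rule power_le_one[rotated]) simp
    qed
    finally show ?thesis using vv_nonneg[of a r] by (simp add: mult_left_le)
  next
    case False
    then show ?thesis by (simp add: vv_def)
  qed
  have nf: "norm (f m r) = x^(2*m) / fact (2*m) * (vv a r * r^(2*m))" for m r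
    by (simp add: f_def c_def abs_mult vv_nonneg power_mult power_abs)
  have sums_pt: "(\<lambda>m. f m r) sums (vv a r * cos (x * r))" for r
    unfolding fm by (rule sums_mult[OF cos_paired])
  have "(\<lambda>m. integral\<^sup>L lborel (f m)) sums (\<integral>r. (\<Sum>m. f m r) \<partial>lborel)"
  proof (rule sums_integral)
    show "integrable lborel (f m)" for m by (rule fint)
    show "AE r in lborel. summable (\<lambda>m. norm (f m r))"
    proof (rule AE_I2)
      fix r
      have "summable (\<lambda>m. vv a r * ((x*r)^(2*m) / fact (2*m)))"
        by (intro summable_mult summable_even_exp)
      moreover have "norm (f m r) = vv a r * ((x*r)^(2*m) / fact (2*m))" for m
        unfolding nf by (simp add: power_mult_distrib)
      ultimately show "summable (\<lambda>m. norm (f m r))" by simp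
    qed
    show "summable (\<lambda>m. \<integral>r. norm (f m r) \<partial>lborel)"
    proof (rule summable_comparison_test[where g="\<lambda>m. x^(2*m) / fact (2*m) * (\<integral>r. vv a r \<partial>lborel)"])
      show "summable (\<lambda>m. x^(2*m) / fact (2*m) * (\<integral>r. vv a r \<partial>lborel))"
        by (intro summable_mult2 summable_even_exp)
      show "\<exists>N. \<forall>n\<ge>N. norm (\<integral>r. norm (f n r) \<partial>lborel) \<le> x^(2*n) / fact (2*n) * (\<integral>r. vv a r \<partial>lborel)"
      proof (intro exI allI impI)
        fix n :: nat
        have "(\<integral>r. norm (f n r) \<partial>lborel) = x^(2*n) / fact (2*n) * (\<integral>r. vv a r * r^(2*n) \<partial>lborel)"
          unfolding nf by simp
        also have "\<dots> \<le> x^(2*n) / fact (2*n) * (\<integral>r. vv a r \<partial>lborel)"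
          by (intro mult_left_mono integral_mono vbound momI vv_integrable[OF a])
             (simp add: power_mult)
        finally have le: "(\<integral>r. norm (f n r) \<partial>lborel) \<le> x^(2*n) / fact (2*n) * (\<integral>r. vv a r \<partial>lborel)" .
        have "0 \<le> (\<integral>r. norm (f n r) \<partial>lborel)" by simp
        then show "norm (\<integral>r. norm (f n r) \<partial>lborel) \<le> x^(2*n) / fact (2*n) * (\<integral>r. vv a r \<partial>lborel)"
          using le by simp
      qed
    qed
  qed
  moreover have "(\<integral>r. (\<Sum>m. f m r) \<partial>lborel) = EE a x"
    unfolding EE_def using sums_pt by (simp add: sums_iff)
  ultimately show ?thesis using fI by (simp add: c_def)
qed


lemma bessel_poisson:
  assumes a: "a > 0" and x: "x > 0"
  shows "besselJ a (x/2) = 2 * 4 powr (-a) / (Gamma (a + 1/2) * sqrt pi) * x powr a * EE a x"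
proof -
  define P where "P = 2 * 4 powr (-a) / (Gamma (a + 1/2) * sqrt pi) * x powr a"
  define T where "T m = (-1)^m / fact (2*m) * x^(2*m) * (Beta (real m + 1/2) (a + 1/2) / (2 * 4^m))" for m :: nat
  have s1: "(\<lambda>m. P * T m) sums (P * EE a x)"
    unfolding T_def by (intro sums_mult EE_series[OF a])
  have trm: "P * T m = (-1)^m / (fact m * Gamma (real m + a + 1)) * (x / 2 / 2) powr (2 * real m + a)" for m
  proof -
    have g1: "Gamma (a + 1/2) > 0" using a by simp
    have g2: "Gamma (real m + a + 1) > 0" using a by simp
    have ga: "Gamma (real m + 1/2 + (a + 1/2)) = Gamma (real m + a + 1)" by (simp add: algebra_simps)
    have B: "Beta (real m + 1/2) (a + 1/2) = fact (2*m) * sqrt pi / (4^m * fact m) * Gamma (a + 1/2) / Gamma (real m + a + 1)"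
      unfolding Beta_def Gamma_half_nat ga ..
    have x4: "(x / 2 / 2) powr (2 * real m + a) = x^(2*m) / (4^m * 4^m) * (x powr a / 4 powr a)"
    proof -
      have "(x / 2 / 2) powr (2 * real m + a) = (x/4) powr (real (2*m)) * (x/4) powr a"
        by (simp add: powr_add)
      also have "(x/4) powr (real (2*m)) = (x/4)^(2*m)" using x by (rule powr_realpow[of "x/4", simplified])
      also have "(x/4)^(2*m) = x^(2*m) / (4^m * 4^m)"
        by (simp only: power_divide mult_2 power_add) simp
      also have "(x/4) powr a = x powr a / 4 powr a" using x by (simp add: powr_divide)
      finally show ?thesis .
    qed
    have p4: "4 powr (-a) = 1 / 4 powr a" by (simp add: powr_minus_divide)
    show ?thesis
      unfolding P_def T_def B x4 p4 using g1 g2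
      by (simp add: field_simps)
  qed
  have "besselJ a (x/2) = (\<Sum>m. P * T m)"
    unfolding besselJ_def trm ..
  also have "\<dots> = P * EE a x" using s1 by (simp add: sums_iff)
  finally show ?thesis unfolding P_def .
qed

lemma EE_abs: "EE a \<bar>x\<bar> = EE a x"
  unfolding EE_def by (cases "x \<ge> 0") (auto simp: abs_if)

definition PP :: "real \<Rightarrow> real" where
  "PP a = 2 * 4 powr (-a) / (Gamma (a + 1/2) * sqrt pi)"

lemma phi_EE:
  assumes a: "a > 0" and x: "x \<noteq> 0"
  shows "phi a x = (PP a)\<^sup>2 * (EE a x)\<^sup>2"
proof -
  have ax: "\<bar>x\<bar> > 0" using x by simp
  have "phi a x = (besselJ a (\<bar>x\<bar> / 2))\<^sup>2 / \<bar>x\<bar> powr (2 * a)"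
    using x by (simp add: phi_def)
  also have "besselJ a (\<bar>x\<bar> / 2) = PP a * \<bar>x\<bar> powr a * EE a x"
    using bessel_poisson[OF a ax] by (simp add: PP_def EE_abs)
  also have "\<bar>x\<bar> powr (2 * a) = \<bar>x\<bar> powr a * \<bar>x\<bar> powr a"
    by (simp add: powr_add[symmetric])
  finally show ?thesis using ax by (simp add: power2_eq_square field_simps)
qed


lemma EE_measurable[measurable]: "EE a \<in> borel_measurable borel"
  unfolding EE_def[abs_def] by measurable

lemma phi_measurable:
  assumes a: "a > 0"
  shows "phi a \<in> borel_measurable borel"
proof -
  have "phi a = (\<lambda>x. if x = 0 then phi a 0 else (PP a)\<^sup>2 * (EE a x)\<^sup>2)"
    by (rule ext) (simp add: phi_EE[OF a])
  also have "\<dots> \<in> borel_measurable borel" by measurable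
  finally show ?thesis .
qed

lemma fourier_phi:
  assumes a: "a > 0"
  shows "fourier (phi a) \<xi> = complex_of_real (sqrt (2*pi) * (PP a)\<^sup>2 * HH a \<xi>)"
proof -
  have "(\<integral>x. complex_of_real (phi a x) * exp (- \<i> * complex_of_real (\<xi> * x)) \<partial>lborel)
      = (\<integral>x. complex_of_real ((PP a)\<^sup>2) * (complex_of_real ((EE a x)\<^sup>2) * iexp (- (\<xi> * x))) \<partial>lborel)"
  proof (rule integral_cong_AE)
    show "(\<lambda>x. complex_of_real (phi a x) * exp (- \<i> * complex_of_real (\<xi> * x))) \<in> borel_measurable lborel"
      using phi_measurable[OF a] by measurable
    show "(\<lambda>x. complex_of_real ((PP a)\<^sup>2) * (complex_of_real ((EE a x)\<^sup>2) * iexp (- (\<xi> * x)))) \<in> borel_measurable lborel"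
      by measurable
    show "AE x in lborel. complex_of_real (phi a x) * exp (- \<i> * complex_of_real (\<xi> * x))
        = complex_of_real ((PP a)\<^sup>2) * (complex_of_real ((EE a x)\<^sup>2) * iexp (- (\<xi> * x)))"
      using AE_lborel_singleton[of 0] by eventually_elim (simp add: phi_EE[OF a])
  qed
  also have "\<dots> = complex_of_real ((PP a)\<^sup>2) * complex_of_real (2*pi*HH a \<xi>)"
    by (simp only: integral_mult_right_zero EE_fourier(2)[OF a])
  finally have I: "(\<integral>x. complex_of_real (phi a x) * exp (- \<i> * complex_of_real (\<xi> * x)) \<partial>lborel)
      = complex_of_real ((PP a)\<^sup>2) * complex_of_real (2*pi*HH a \<xi>)" .
  have "fourier (phi a) \<xi> = complex_of_real (1 / sqrt (2*pi) * ((PP a)\<^sup>2 * (2*pi*HH a \<xi>)))"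
    unfolding fourier_def I by simp
  also have "1 / sqrt (2*pi) * ((PP a)\<^sup>2 * (2*pi*HH a \<xi>)) = sqrt (2*pi) * (PP a)\<^sup>2 * HH a \<xi>"
  proof -
    have "2*pi = sqrt (2*pi) * sqrt (2*pi)" by simp
    then have "1 / sqrt (2*pi) * (2*pi) = sqrt (2*pi)" by (metis nonzero_mult_div_cancel_left
        divide_eq_0_iff mult.commute times_divide_eq_left mult_1 pi_gt_zero real_sqrt_eq_zero_cancel_iff
        zero_neq_numeral mult_eq_0_iff less_irrefl)
    note e = this
    have "1 / sqrt (2*pi) * ((PP a)\<^sup>2 * (2*pi*HH a \<xi>)) = (1 / sqrt (2*pi) * (2*pi)) * ((PP a)\<^sup>2 * HH a \<xi>)"
      by (simp only: mult_ac)
    then show ?thesis unfolding e by (simp only: mult_ac)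
  qed
  finally show ?thesis .
qed

lemma PP_pos: "a > 0 \<Longrightarrow> PP a > 0"
  unfolding PP_def by (intro divide_pos_pos mult_pos_pos) auto


lemma powr_cancel_R: "R > 0 \<Longrightarrow> R powr (2*a) * (y/R) powr (2*a) = (y::real) powr (2*a)"
  by (simp add: powr_mult[symmetric])

theorem mainTheorem4:
  shows "\<exists>c d :: real \<Rightarrow> real.
    continuous_on {0<..<1} c \<and>
    (\<forall>a \<in> {0<..<1::real}.
       c a > 0 \<and> d a > 0 \<and>
       (\<forall>R y. R > 0 \<longrightarrow> y > 0 \<longrightarrow>
          R powr (2 * a) * Re (fourier (phi a) (1 - y / R)) \<le> d a * y powr (2 * a)) \<and>
       (\<forall>y. y > 0 \<longrightarrow>
          ((\<lambda>R. complex_of_real (R powr (2 * a)) * fourier (phi a) (1 - y / R))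
             \<longlongrightarrow> complex_of_real (c a * y powr (2 * a))) at_top))"
proof -
  define C0 where "C0 a = sqrt (2*pi) * (PP a)\<^sup>2" for a
  define c where "c a = C0 a * 16 powr (a - 1/2) * Beta (a + 1/2) (a + 1/2)" for a
  define d where "d a = C0 a * 16 powr (a - 1/2) * (\<integral>t. DD a t \<partial>lborel) + 1" for a
  have cont: "continuous_on {0<..<1} c"
  proof (rule continuous_at_imp_continuous_on, rule ballI)
    fix a :: real assume a: "a \<in> {0<..<1}"
    have g1: "Gamma (a + 1/2) > 0" "Gamma (a + 1/2 + (a + 1/2)) > 0" using a by auto
    have G1: "isCont (\<lambda>a. Gamma (a + 1/2)) a"
      by (rule isCont_Gamma[OF _ pos_not_nonpos_Int]) (use a in \<open>auto intro!: continuous_intros\<close>)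
    have G2: "isCont (\<lambda>a. Gamma (a + 1/2 + (a + 1/2))) a"
      by (rule isCont_Gamma[OF _ pos_not_nonpos_Int]) (use a in \<open>auto intro!: continuous_intros\<close>)
    have P4: "isCont (\<lambda>a. 4 powr (-a) :: real) a" by (intro continuous_intros) auto
    have P16: "isCont (\<lambda>a. 16 powr (a - 1/2) :: real) a" by (intro continuous_intros) auto
    have PP: "isCont PP a"
    proof -
      have "isCont (\<lambda>a. 2 * 4 powr (-a) / (Gamma (a + 1/2) * sqrt pi)) a"
        by (rule isCont_divide[OF isCont_mult[OF continuous_const P4] isCont_mult[OF G1 continuous_const]]) (use g1 in simp)
      then show ?thesis unfolding PP_def[abs_def] .
    qed
    show "isCont c a"
    proof -
      have "isCont (\<lambda>a. C0 a) a" unfolding C0_def[abs_def]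
        by (intro isCont_mult continuous_const isCont_power PP)
      moreover have "isCont (\<lambda>a. Beta (a + 1/2) (a + 1/2)) a" unfolding Beta_def
        by (rule isCont_divide[OF isCont_mult[OF G1 G1] G2]) (use g1 in simp)
      ultimately show ?thesis unfolding c_def[abs_def]
        by (intro isCont_mult P16)
    qed
  qed
  have main: "c a > 0 \<and> d a > 0 \<and>
       (\<forall>R y. R > 0 \<longrightarrow> y > 0 \<longrightarrow>
          R powr (2 * a) * Re (fourier (phi a) (1 - y / R)) \<le> d a * y powr (2 * a)) \<and>
       (\<forall>y. y > 0 \<longrightarrow>
          ((\<lambda>R. complex_of_real (R powr (2 * a)) * fourier (phi a) (1 - y / R))
             \<longlongrightarrow> complex_of_real (c a * y powr (2 * a))) at_top)" if a: "a \<in> {0<..<1}" for a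
  proof -
    have a0: "a > 0" using a by simp
    have C0pos: "C0 a > 0" unfolding C0_def using PP_pos[OF a0] by simp
    have Bpos: "Beta (a + 1/2) (a + 1/2) > 0" using a0 by (simp add: Beta_def)
    have DD0: "0 \<le> (\<integral>t. DD a t \<partial>lborel)" by (intro integral_nonneg_AE AE_I2 DD_nonneg)
    have cpos: "c a > 0" unfolding c_def using C0pos Bpos by simp
    have dpos: "d a > 0" unfolding d_def using C0pos DD0 by (simp add: add_nonneg_pos)
    have ReF: "Re (fourier (phi a) \<xi>) = C0 a * HH a \<xi>" for \<xi>
      unfolding fourier_phi[OF a0] C0_def by simp
    have bound: "R powr (2 * a) * Re (fourier (phi a) (1 - y / R)) \<le> d a * y powr (2 * a)"
      if R: "R > 0" and y: "y > 0" for R y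
    proof -
      define K where "K = 16 powr (a - 1/2) * (\<integral>t. DD a t \<partial>lborel)"
      have K0: "0 \<le> K" unfolding K_def using DD0 by simp
      have "HH a (1 - y/R) \<le> K * (1 - (1 - y/R)) powr (2*a)"
        unfolding K_def by (rule HH_bound_edge[OF a0]) (use R y in simp)
      then have h: "HH a (1 - y/R) \<le> K * (y/R) powr (2*a)" by simp
      have "R powr (2 * a) * Re (fourier (phi a) (1 - y / R)) = C0 a * (R powr (2*a) * HH a (1 - y/R))"
        unfolding ReF by (simp add: mult_ac)
      also have "\<dots> \<le> C0 a * (R powr (2*a) * (K * (y/R) powr (2*a)))"
        using h C0pos by (intro mult_left_mono) auto
      also have "\<dots> = C0 a * K * (R powr (2*a) * (y/R) powr (2*a))" by (simp add: mult_ac)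
      also have "\<dots> = C0 a * K * y powr (2*a)" using R by (simp add: powr_cancel_R)
      also have "\<dots> \<le> d a * y powr (2*a)"
        unfolding d_def K_def by (intro mult_right_mono) (auto simp: mult_ac)
      finally show ?thesis .
    qed
    have lim: "((\<lambda>R. complex_of_real (R powr (2 * a)) * fourier (phi a) (1 - y / R))
             \<longlongrightarrow> complex_of_real (c a * y powr (2 * a))) at_top" if y: "y > 0" for y
    proof -
      have ev: "eventually (\<lambda>R. complex_of_real (R powr (2 * a)) * fourier (phi a) (1 - y / R)
          = complex_of_real (C0 a * 16 powr (a - 1/2) * y powr (2*a) * Phi a (1 - y/R))) at_top"
        using eventually_ge_at_top[of y]
      proof eventually_elim
        case (elim R)
        have R: "R > 0" using elim y by simp
        have xi: "0 \<le> 1 - y/R" "1 - y/R < 1" using elim y R by (auto simp: field_simps)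
        have "HH a (1 - y/R) = 16 powr (a - 1/2) * (1 - (1 - y/R)) powr (2*a) * Phi a (1 - y/R)"
          by (rule HH_formula[OF xi])
        then have "HH a (1 - y/R) = 16 powr (a - 1/2) * (y/R) powr (2*a) * Phi a (1 - y/R)" by simp
        then have "R powr (2 * a) * (C0 a * HH a (1 - y/R)) = C0 a * 16 powr (a - 1/2) * (R powr (2*a) * (y/R) powr (2*a)) * Phi a (1 - y/R)"
          by (simp add: mult_ac)
        also have "\<dots> = C0 a * 16 powr (a - 1/2) * y powr (2*a) * Phi a (1 - y/R)"
          using R by (simp add: powr_cancel_R)
        finally have e: "R powr (2 * a) * (C0 a * HH a (1 - y/R)) = C0 a * 16 powr (a - 1/2) * y powr (2*a) * Phi a (1 - y/R)" .
        show ?case unfolding fourier_phi[OF a0] C0_def[symmetric] e[symmetric]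
          by (simp add: mult_ac)
      qed
      have g: "((\<lambda>R. 1 - y/R) \<longlongrightarrow> 1) at_top"
      proof -
        have "((\<lambda>R. y/R) \<longlongrightarrow> 0) at_top"
          by (rule tendsto_divide_0[OF tendsto_const filterlim_at_top_imp_at_infinity[OF filterlim_ident]])
        then have "((\<lambda>R. 1 - y/R) \<longlongrightarrow> 1 - 0) at_top" by (intro tendsto_intros)
        then show ?thesis by simp
      qed
      have gin: "eventually (\<lambda>R. 1 - y/R \<in> {0..1}) at_top"
        using eventually_ge_at_top[of y]
      proof eventually_elim
        case (elim R)
        then show ?case using y by (auto simp: field_simps)
      qed
      have "((\<lambda>R. Phi a (1 - y/R)) \<longlongrightarrow> Phi a 1) at_top"
        by (rule continuous_on_tendsto_compose[OF Phi_cont[OF a0] g _ gin]) simp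
      then have "((\<lambda>R. complex_of_real (C0 a * 16 powr (a - 1/2) * y powr (2*a) * Phi a (1 - y/R)))
          \<longlongrightarrow> complex_of_real (C0 a * 16 powr (a - 1/2) * y powr (2*a) * Phi a 1)) at_top"
        by (intro tendsto_of_real tendsto_mult tendsto_const)
      also have "C0 a * 16 powr (a - 1/2) * y powr (2*a) * Phi a 1 = c a * y powr (2 * a)"
        unfolding Phi_one[OF a0] c_def by (simp add: mult_ac)
      finally show ?thesis using tendsto_cong[OF ev] by simp
    qed
    show ?thesis by (intro conjI allI impI cpos dpos bound lim)
  qed
  show ?thesis
    by (rule exI[of _ c], rule exI[of _ d], rule conjI[OF cont], rule ballI, rule main)
qed


end
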